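(* Let $d, D, k, L, N$ be positive integers. Let $A^1,\dots,A^d \in \mathbb{C}^{D\times D}$ define an injective matrix product state tensor with injectivity length $L$, and for $N$ sites let $$\ket{\psi_N}=\sum_{i_1,\dots,i_N=1}^d \operatorname{Tr}\big(A^{i_1}A^{i_2}\cdots A^{i_N}\big)\ket{i_1 i_2\cdots i_N}\in(\mathbb{C}^d)^{\otimes N}.$$ Let $o$ be an operator on $(\mathbb{C}^d)^{\otimes k}$ (not necessarily Hermitian), with matrix elements $o^{i_1\cdots i_k}_{j_1\cdots j_k}=\bra{i_1\cdots i_k}o\ket{j_1\cdots j_k}$, and let $O_N=\sum_{i=1}^N o_i$, where $o_i$ denotes $o$ acting on the sites $i,i+1,\dots,i+k-1$ (sites indexed modulo $N$) and as the identity elsewhere. Assume $N>2L+2k-1$, and let $E_N\in\mathbb{C}$, $\epsilon=E_N/N$. Then $$O_N\ket{\psi_N}=E_N\ket{\psi_N}$$ if and only if there exist matrices $B^{i_1\cdots i_{k-1}}\in\mathbb{C}^{D\times D}$, one for each $(i_1,\dots,i_{k-1})\in\{1,\dots,d\}^{k-1}$, such that for all $i_1,\dots,i_k\in\{1,\dots,d\}$ $$\sum_{j_1,\dots,j_k=1}^d\Big(o^{i_1\cdots i_k}_{j_1\cdots j_k}-\epsilon\,\delta_{i_1j_1}\cdots\delta_{i_kj_k}\Big)A^{j_1}A^{j_2}\cdots A^{j_k}=A^{i_1}B^{i_2\cdots i_k}-B^{i_1\cdots i_{k-1}}A^{i_k}$$ (as an equality of $D\times D$ matrices).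
   Context: For $M\ge1$ define the linear map $\Gamma_M:\mathbb{C}^{D\times D}\to(\mathbb{C}^d)^{\otimes M}$, $\Gamma_M(X)=\sum_{i_1,\dots,i_M}\operatorname{Tr}(XA^{i_1}\cdots A^{i_M})\ket{i_1\cdots i_M}$. The tensor $A$ is called injective if $\Gamma_M$ is injective for some $M$ (then it is injective for all larger $M$), and the injectivity length $L$ is the minimal such $M$. The matrices $A^i$ and the local operator $o$ are the same on every site (translation invariance). *)

theory Defs
  imports "HOL-Analysis.Analysis"
begin

text \<open>Physical indices {1..d} are the elements of a finite type 'd (d = CARD('d));
  bond indices {1..D} the elements of a finite type 'D (D = CARD('D)).
  A basis vector |i_1 ... i_n> is a list of length n over 'd, and a vector of
  (C^d)^{tensor n} is a function from such lists to complex (only values on lists of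
  length n matter).\<close>



definition words :: "nat \<Rightarrow> 'd list set" where
  "words n = {ws. length ws = n}"

definition mscale :: "complex \<Rightarrow> complex^'D^'D \<Rightarrow> complex^'D^'D" where
  "mscale c M = (\<chi> a b. c * M $ a $ b)"

definition mprod :: "('d \<Rightarrow> complex^'D^'D) \<Rightarrow> 'd list \<Rightarrow> complex^'D^'D" where
  "mprod A ws = foldr (\<lambda>i M. A i ** M) ws (mat 1)"

definition Gamma :: "('d \<Rightarrow> complex^'D^'D) \<Rightarrow> nat \<Rightarrow> complex^'D^'D \<Rightarrow> 'd list \<Rightarrow> complex" where
  "Gamma A M X = (\<lambda>ws. if length ws = M then trace (X ** mprod A ws) else 0)"

definition injective_at :: "('d \<Rightarrow> complex^'D^'D) \<Rightarrow> nat \<Rightarrow> bool" where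
  "injective_at A M \<longleftrightarrow> inj (Gamma A M)"

definition injectivity_length :: "('d \<Rightarrow> complex^'D^'D) \<Rightarrow> nat \<Rightarrow> bool" where
  "injectivity_length A L \<longleftrightarrow> 1 \<le> L \<and> injective_at A L \<and> (\<forall>M. 1 \<le> M \<and> M < L \<longrightarrow> \<not> injective_at A M)"

definition mps_state :: "('d \<Rightarrow> complex^'D^'D) \<Rightarrow> nat \<Rightarrow> 'd list \<Rightarrow> complex" where
  "mps_state A N = (\<lambda>ws. if length ws = N then trace (mprod A ws) else 0)"

definition local_window :: "nat \<Rightarrow> nat \<Rightarrow> nat \<Rightarrow> 'd list \<Rightarrow> 'd list" where
  "local_window N k i xs = map (\<lambda>t. xs ! ((i + t) mod N)) [0..<k]"

definition site_update :: "nat \<Rightarrow> nat \<Rightarrow> 'd list \<Rightarrow> 'd list \<Rightarrow> 'd list" where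
  "site_update N i js xs =
     map (\<lambda>p. if (p + N - i) mod N < length js then js ! ((p + N - i) mod N) else xs ! p) [0..<N]"

text \<open>O_N = sum_{i} o_i applied to a vector v of (C^d)^{tensor N}; o is given by its
  matrix elements o is js = <is| o |js> (is, js of length k); sites i = 0..N-1.\<close>
definition local_sum_op :: "nat \<Rightarrow> nat \<Rightarrow> ('d list \<Rightarrow> 'd list \<Rightarrow> complex)
      \<Rightarrow> ('d list \<Rightarrow> complex) \<Rightarrow> 'd list \<Rightarrow> complex" where
  "local_sum_op N k h v = (\<lambda>xs. if length xs = N then
      (\<Sum>i<N. \<Sum>js\<in>words k. h (local_window N k i xs) js * v (site_update N i js xs))
     else 0)"

end

theory Submission
  imports Defs
begin

type_synonym 'D mat = "complex^'D^'D"

lemma mscale_nth[simp]: "mscale c M $ i $ j = c * M $ i $ j"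
  by (simp add: mscale_def)

lemma mscale_add: "mscale c (M + N) = mscale c M + mscale c N"
  by (simp add: vec_eq_iff algebra_simps)
lemma mscale_diff: "mscale c (M - N) = mscale c M - mscale c N"
  by (simp add: vec_eq_iff algebra_simps)
lemma mscale_addc: "mscale (c + d) M = mscale c M + mscale d M"
  by (simp add: vec_eq_iff algebra_simps)
lemma mscale_diffc: "mscale (c - d) M = mscale c M - mscale d M"
  by (simp add: vec_eq_iff algebra_simps)
lemma mscale_minus: "mscale (- c) M = - mscale c M"
  by (simp add: vec_eq_iff algebra_simps)
lemma mscale_0[simp]: "mscale 0 M = 0" "mscale c 0 = 0"
  by (simp_all add: vec_eq_iff)
lemma mscale_1[simp]: "mscale 1 M = M"
  by (simp add: vec_eq_iff)
lemma mscale_mscale: "mscale c (mscale d M) = mscale (c * d) M"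
  by (simp add: vec_eq_iff)
lemma mscale_sum: "mscale c (sum f S) = sum (\<lambda>i. mscale c (f i)) S"
  by (induct S rule: infinite_finite_induct) (auto simp: mscale_add)
lemma mscale_sumc: "mscale (sum f S) M = sum (\<lambda>i. mscale (f i) M) S"
  by (induct S rule: infinite_finite_induct) (auto simp: mscale_addc)
lemma mscale_left: "mscale c (M ** N) = mscale c M ** (N::complex^'n^'n)"
  by (simp add: vec_eq_iff matrix_matrix_mult_def sum_distrib_left mult.assoc)
lemma mscale_right: "mscale c (M ** N) = M ** mscale c (N::complex^'n^'n)"
  by (simp add: vec_eq_iff matrix_matrix_mult_def sum_distrib_left mult.assoc mult.left_commute)

lemma add_mult_right: "(M + N) ** (P::complex^'n^'n) = M ** P + N ** P"
  by (simp add: vec_eq_iff matrix_matrix_mult_def sum.distrib algebra_simps)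
lemma sum_mult_right: "sum f S ** (M::complex^'n^'n) = sum (\<lambda>i. f i ** M) S"
  by (induct S rule: infinite_finite_induct) (auto simp: add_mult_right)
lemma sum_mult_left: "(M::complex^'n^'n) ** sum f S = sum (\<lambda>i. M ** f i) S"
  by (induct S rule: infinite_finite_induct) (auto simp: matrix_add_ldistrib)
lemma diff_mult_right: "(M - N) ** (P::complex^'n^'n) = M ** P - N ** P"
  by (simp add: vec_eq_iff matrix_matrix_mult_def sum_subtractf algebra_simps)
lemma diff_mult_left: "(P::complex^'n^'n) ** (M - N) = P ** M - P ** N"
  by (simp add: vec_eq_iff matrix_matrix_mult_def sum_subtractf algebra_simps)
lemma zero_mult[simp]: "(0::complex^'n^'n) ** M = 0" "M ** (0::complex^'n^'n) = 0"
  by (simp_all add: vec_eq_iff matrix_matrix_mult_def)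
lemma neg_mult: "(- M) ** (P::complex^'n^'n) = - (M ** P)" "P ** (- M) = - (P ** M)"
  by (simp_all add: vec_eq_iff matrix_matrix_mult_def sum_negf)

lemma trace_sum: "trace (sum f S :: complex^'n^'n) = sum (\<lambda>i. trace (f i)) S"
  by (induct S rule: infinite_finite_induct) (auto simp: trace_add trace_0[unfolded mat_0])
lemma trace_mscale: "trace (mscale c M) = c * trace (M :: complex^'n^'n)"
  by (simp add: trace_def sum_distrib_left)
lemma trace_neg: "trace (- M) = - trace (M :: complex^'n^'n)"
  by (simp add: trace_def sum_negf)
lemma trace_zero[simp]: "trace (0::complex^'n^'n) = 0"
  by (simp add: trace_def)

lemma mprod_Nil[simp]: "mprod A [] = mat 1"
  by (simp add: mprod_def)
lemma mprod_Cons[simp]: "mprod A (a # w) = A a ** mprod A w"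
  by (simp add: mprod_def)
lemma mprod_append: "mprod A (u @ w) = mprod A u ** mprod A w"
  by (induct u) (simp_all add: matrix_mul_assoc)
lemma mprod_single: "mprod A [a] = A a"
  by simp
lemma mprod_snoc: "mprod A (u @ [a]) = mprod A u ** A a"
  by (simp add: mprod_append)

lemma words_finite[simp]: "finite (words n :: ('d::finite) list set)"
  unfolding words_def using finite_lists_length_eq[of "UNIV::'d set" n] by simp
lemma words_mem[simp]: "xs \<in> words n \<longleftrightarrow> length xs = n"
  by (simp add: words_def)

definition munit :: "'n \<Rightarrow> 'n \<Rightarrow> complex^'n^'n" where
  "munit i j = (\<chi> a b. if a = i \<and> b = j then 1 else 0)"

lemma trace_munit: "trace (M ** munit i j) = M $ j $ i"
proof -
  have "trace (M ** munit i j) = (\<Sum>a\<in>UNIV. \<Sum>b\<in>UNIV. M $ a $ b * (if b = i \<and> a = j then 1 else 0))"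
    by (simp add: trace_def matrix_matrix_mult_def munit_def)
  also have "\<dots> = (\<Sum>a\<in>UNIV. if a = j then M $ a $ i else 0)"
    by (intro sum.cong refl) (auto simp: if_distrib cong: if_cong)
  also have "\<dots> = M $ j $ i" by simp
  finally show ?thesis .
qed

lemma trace_zero_all: "(\<And>P. trace (M ** P) = 0) \<Longrightarrow> (M::complex^'n^'n) = 0"
  by (metis trace_munit vec_eq_iff zero_index)


definition lc :: "('d \<Rightarrow> complex^'D^'D) \<Rightarrow> ('d list \<Rightarrow> complex) \<Rightarrow> 'd list set \<Rightarrow> complex^'D^'D" where
  "lc A \<alpha> S = (\<Sum>x\<in>S. mscale (\<alpha> x) (mprod A x))"

definition spans :: "('d \<Rightarrow> complex^'D^'D) \<Rightarrow> nat \<Rightarrow> bool" where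
  "spans A m \<longleftrightarrow> (\<forall>M. \<exists>\<alpha>. M = lc A \<alpha> (words m))"

lemma lc_regroup:
  fixes A :: "'d::finite \<Rightarrow> complex^'D^'D"
  assumes "finite I" "\<And>i. i \<in> I \<Longrightarrow> g i \<in> words n"
  shows "(\<Sum>i\<in>I. mscale (c i) (mprod A (g i))) = lc A (\<lambda>x. \<Sum>i\<in>{i\<in>I. g i = x}. c i) (words n)"
proof -
  have "(\<Sum>i\<in>I. mscale (c i) (mprod A (g i))) = (\<Sum>x\<in>words n. \<Sum>i\<in>{i\<in>I. g i = x}. mscale (c i) (mprod A (g i)))"
    by (rule sum.group[symmetric]) (use assms in auto)
  also have "\<dots> = (\<Sum>x\<in>words n. \<Sum>i\<in>{i\<in>I. g i = x}. mscale (c i) (mprod A x))"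
    by (intro sum.cong refl) auto
  also have "\<dots> = lc A (\<lambda>x. \<Sum>i\<in>{i\<in>I. g i = x}. c i) (words n)"
    by (simp add: lc_def mscale_sumc)
  finally show ?thesis .
qed

lemma scaleR_mat_nth: "(c *\<^sub>R (M::complex^'n^'m)) $ i $ j = complex_of_real c * M $ i $ j"
  by (simp add: complex_eq_iff)

lemma inner_trace:
  fixes Z M :: "complex^'D^'D"
  defines "W \<equiv> (\<chi> i j. cnj (Z $ j $ i))"
  shows "Re (trace (W ** M)) = inner Z M" "Im (trace (W ** M)) = - inner Z (mscale \<i> M)"
proof -
  have t: "trace (W ** M) = (\<Sum>i\<in>UNIV. \<Sum>j\<in>UNIV. cnj (Z $ j $ i) * M $ j $ i)"
    by (simp add: trace_def matrix_matrix_mult_def W_def)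
  have i1: "inner Z M = (\<Sum>j\<in>UNIV. \<Sum>i\<in>UNIV. Re (Z $ j $ i) * Re (M $ j $ i) + Im (Z $ j $ i) * Im (M $ j $ i))"
    by (simp add: inner_vec_def inner_complex_def)
  have i2: "inner Z (mscale \<i> M) = (\<Sum>j\<in>UNIV. \<Sum>i\<in>UNIV. - Re (Z $ j $ i) * Im (M $ j $ i) + Im (Z $ j $ i) * Re (M $ j $ i))"
    by (simp add: inner_vec_def inner_complex_def)
  show "Re (trace (W ** M)) = inner Z M"
    unfolding t i1 Re_sum by (subst sum.swap) (simp add: algebra_simps)
  show "Im (trace (W ** M)) = - inner Z (mscale \<i> M)"
    unfolding t i2 Im_sum by (subst sum.swap) (simp add: algebra_simps sum_negf[symmetric])
qed

lemma inj_spans: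
  fixes A :: "'d::finite \<Rightarrow> complex^'D::finite^'D"
  assumes inj: "injective_at A L"
  shows "spans A L"
proof -
  let ?T = "{M. \<exists>\<alpha>. M = lc A \<alpha> (words L)}"
  let ?S = "(\<lambda>x. mprod A x) ` words L \<union> (\<lambda>x. mscale \<i> (mprod A x)) ` words L"
  have sub: "subspace ?T"
    unfolding subspace_def
  proof (intro conjI allI ballI impI)
    show "0 \<in> ?T" by (auto intro!: exI[of _ "\<lambda>_. 0"] simp: lc_def)
  next
    fix x y assume "x \<in> ?T" "y \<in> ?T"
    then obtain a b where "x = lc A a (words L)" "y = lc A b (words L)" by auto
    then show "x + y \<in> ?T"
      by (auto intro!: exI[of _ "\<lambda>z. a z + b z"] simp: lc_def mscale_addc sum.distrib)
  next
    fix c :: real and x assume "x \<in> ?T"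
    then obtain a where "x = lc A a (words L)" by auto
    have "c *\<^sub>R x = lc A (\<lambda>z. of_real c * a z) (words L)"
      unfolding vec_eq_iff \<open>x = _\<close>
      by (intro allI, simp only: scaleR_mat_nth) (simp add: lc_def sum_component sum_distrib_left mult.assoc)
    then show "c *\<^sub>R x \<in> ?T" by blast
  qed
  have ST: "?S \<subseteq> ?T"
  proof
    fix M assume "M \<in> ?S"
    then obtain x c where x: "x \<in> words L" and M: "M = mscale c (mprod A x)"
      by auto (metis mscale_1)
    have "M = lc A (\<lambda>y. if y = x then c else 0) (words L)"
    proof -
      have "lc A (\<lambda>y. if y = x then c else 0) (words L) = (\<Sum>y\<in>words L. if y = x then mscale c (mprod A x) else 0)"
        unfolding lc_def by (intro sum.cong refl) auto
      also have "\<dots> = M" using x by (simp add: M)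
      finally show ?thesis by simp
    qed
    then show "M \<in> ?T" by auto
  qed
  have full: "span ?S = UNIV"
  proof (rule ccontr)
    assume "span ?S \<noteq> UNIV"
    then have "span ?S \<subset> span UNIV" by auto
    then obtain Z where Z0: "Z \<noteq> 0" and orth: "\<And>y. y \<in> span ?S \<Longrightarrow> orthogonal Z y"
      by (rule orthogonal_to_subspace_exists_gen) auto
    define W where "W = (\<chi> i j. cnj (Z $ j $ i))"
    have tr0: "trace (W ** mprod A x) = 0" if "x \<in> words L" for x
    proof -
      have "orthogonal Z (mprod A x)" "orthogonal Z (mscale \<i> (mprod A x))"
        using that by (auto intro!: orth span_base)
      then show ?thesis
        using inner_trace[of Z "mprod A x"] unfolding W_def orthogonal_def
        by (simp add: complex_eq_iff)
    qed
    have "Gamma A L W = Gamma A L 0"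
      using tr0 by (auto simp: Gamma_def fun_eq_iff)
    then have "W = 0" using inj by (auto simp: injective_at_def dest: injD)
    then have "Z = 0"
      by (auto simp: vec_eq_iff W_def)
    with Z0 show False by simp
  qed
  have "span ?S \<subseteq> ?T" by (rule span_minimal[OF ST sub])
  then show ?thesis using full by (auto simp: spans_def)
qed

lemma regroup:
  fixes g :: "'i \<Rightarrow> 'd::finite list"
  assumes "finite I" "\<And>i. i \<in> I \<Longrightarrow> g i \<in> words n"
  shows "(\<Sum>i\<in>I. mscale (c i) (F (g i) :: complex^'D^'D)) =
     (\<Sum>x\<in>words n. mscale (\<Sum>i\<in>{i\<in>I. g i = x}. c i) (F x))"
proof -
  have "(\<Sum>i\<in>I. mscale (c i) (F (g i))) = (\<Sum>x\<in>words n. \<Sum>i\<in>{i\<in>I. g i = x}. mscale (c i) (F (g i)))"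
    by (rule sum.group[symmetric]) (use assms in auto)
  also have "\<dots> = (\<Sum>x\<in>words n. \<Sum>i\<in>{i\<in>I. g i = x}. mscale (c i) (F x))"
    by (intro sum.cong refl) auto
  also have "\<dots> = (\<Sum>x\<in>words n. mscale (\<Sum>i\<in>{i\<in>I. g i = x}. c i) (F x))"
    by (simp add: mscale_sumc)
  finally show ?thesis .
qed

lemma spans_Suc:
  fixes A :: "'d::finite \<Rightarrow> complex^'D::finite^'D"
  assumes sL: "spans A L" and L1: "1 \<le> L" and sm: "spans A m"
  shows "spans A (Suc m)"
  unfolding spans_def
proof
  fix M :: "complex^'D^'D"
  obtain \<alpha> where I: "mat 1 = lc A \<alpha> (words L)" using sL by (auto simp: spans_def)
  define \<beta> where "\<beta> x = (SOME b. M ** mprod A (butlast x) = lc A b (words m))" for x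
  have b: "M ** mprod A (butlast x) = lc A (\<beta> x) (words m)" for x
  proof -
    obtain b0 where "M ** mprod A (butlast x) = lc A b0 (words m)" using sm unfolding spans_def by blast
    then show ?thesis unfolding \<beta>_def using someI[of "\<lambda>b. M ** mprod A (butlast x) = lc A b (words m)" b0] by simp
  qed
  have split: "mprod A x = mprod A (butlast x) ** A (last x)" if "x \<in> words L" for x
  proof -
    have "x \<noteq> []" using that L1 by auto
    then have "x = butlast x @ [last x]" by simp
    then show ?thesis by (metis mprod_snoc)
  qed
  have "M = M ** mat 1" by simp
  also have "\<dots> = (\<Sum>x\<in>words L. mscale (\<alpha> x) (M ** mprod A (butlast x) ** A (last x)))"
    unfolding I lc_def sum_mult_left
    by (intro sum.cong refl) (simp add: split mscale_right matrix_mul_assoc)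
  also have "\<dots> = (\<Sum>x\<in>words L. \<Sum>y\<in>words m. mscale (\<alpha> x * \<beta> x y) (mprod A (y @ [last x])))"
    unfolding b lc_def sum_mult_right mscale_sum
    by (intro sum.cong refl) (simp add: mprod_snoc mscale_mscale mscale_left[symmetric])
  also have "\<dots> = (\<Sum>p\<in>words L \<times> words m. mscale (\<alpha> (fst p) * \<beta> (fst p) (snd p)) (mprod A (snd p @ [last (fst p)])))"
    by (simp add: sum.cartesian_product case_prod_beta)
  also have "\<dots> = lc A (\<lambda>z. \<Sum>p\<in>{p\<in>words L \<times> words m. snd p @ [last (fst p)] = z}. \<alpha> (fst p) * \<beta> (fst p) (snd p)) (words (Suc m))"
    by (rule lc_regroup) auto
  finally show "\<exists>\<alpha>. M = lc A \<alpha> (words (Suc m))" by blast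
qed

lemma spans_ge:
  fixes A :: "'d::finite \<Rightarrow> complex^'D::finite^'D"
  assumes sL: "spans A L" and L1: "1 \<le> L" and "L \<le> m"
  shows "spans A m"
  using assms(3)
proof (induct m)
  case 0 then show ?case using L1 by simp
next
  case (Suc m)
  then show ?case
  proof (cases "L = Suc m")
    case True then show ?thesis using sL by simp
  next
    case False then show ?thesis using Suc spans_Suc[OF sL L1] by simp
  qed
qed

definition fr :: "('d \<Rightarrow> complex^'D^'D) \<Rightarrow> nat \<Rightarrow> complex^'D^'D \<Rightarrow> 'd list \<Rightarrow> complex" where
  "fr A m M = (SOME \<alpha>. M = lc A \<alpha> (words m))"

lemma fr: assumes "spans A m" shows "M = lc A (fr A m M) (words m)"
proof -
  obtain b0 where "M = lc A b0 (words m)" using assms unfolding spans_def by blast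
  then show ?thesis unfolding fr_def using someI[of "\<lambda>b. M = lc A b (words m)" b0] by simp
qed

definition NK :: "('d \<Rightarrow> complex^'D^'D) \<Rightarrow> nat \<Rightarrow> ('d list \<Rightarrow> complex^'D^'D) \<Rightarrow> bool" where
  "NK A m f \<longleftrightarrow> (\<forall>\<alpha>. lc A \<alpha> (words m) = 0 \<longrightarrow> (\<Sum>x\<in>words m. mscale (\<alpha> x) (f x)) = 0)"

definition ext :: "('d \<Rightarrow> complex^'D^'D) \<Rightarrow> nat \<Rightarrow> ('d list \<Rightarrow> complex^'D^'D) \<Rightarrow> complex^'D^'D \<Rightarrow> complex^'D^'D" where
  "ext A m f P = (\<Sum>x\<in>words m. mscale (fr A m P x) (f x))"

lemma ext_eq:
  fixes A :: "'d::finite \<Rightarrow> complex^'D::finite^'D"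
  assumes sp: "spans A m" and nk: "NK A m f" and fin: "finite I" and g: "\<And>i. i \<in> I \<Longrightarrow> g i \<in> words m"
    and P: "P = (\<Sum>i\<in>I. mscale (c i) (mprod A (g i)))"
  shows "ext A m f P = (\<Sum>i\<in>I. mscale (c i) (f (g i)))"
proof -
  define \<gamma> where "\<gamma> x = (\<Sum>i\<in>{i\<in>I. g i = x}. c i)" for x
  have P1: "P = lc A \<gamma> (words m)" unfolding P \<gamma>_def by (rule lc_regroup[OF fin g])
  have P2: "P = lc A (fr A m P) (words m)" by (rule fr[OF sp])
  have "lc A (\<lambda>x. \<gamma> x - fr A m P x) (words m) = 0"
    using P1 P2 by (simp add: lc_def mscale_diffc sum_subtractf)
  then have "(\<Sum>x\<in>words m. mscale (\<gamma> x - fr A m P x) (f x)) = 0"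
    using nk unfolding NK_def by blast
  then have "ext A m f P = (\<Sum>x\<in>words m. mscale (\<gamma> x) (f x))"
    by (simp add: ext_def mscale_diffc sum_subtractf)
  also have "\<dots> = (\<Sum>i\<in>I. mscale (c i) (f (g i)))"
    unfolding \<gamma>_def by (rule regroup[OF fin g, symmetric])
  finally show ?thesis .
qed

lemma ext_word:
  fixes A :: "'d::finite \<Rightarrow> complex^'D::finite^'D"
  assumes "spans A m" "NK A m f" "x \<in> words m"
  shows "ext A m f (mprod A x) = f x"
  using ext_eq[OF assms(1,2), of "{x}" "\<lambda>i. i" "mprod A x" "\<lambda>_. 1"] assms(3) by simp

lemma ext_lc:
  fixes A :: "'d::finite \<Rightarrow> complex^'D::finite^'D"
  assumes "spans A m" "NK A m f"
  shows "ext A m f (lc A \<alpha> (words m)) = (\<Sum>x\<in>words m. mscale (\<alpha> x) (f x))"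
  using ext_eq[OF assms(1,2), of "words m" "\<lambda>i. i"] by (simp add: lc_def)

lemma ext_add:
  fixes A :: "'d::finite \<Rightarrow> complex^'D::finite^'D"
  assumes "spans A m" "NK A m f"
  shows "ext A m f (P + Q) = ext A m f P + ext A m f Q"
proof -
  have "P + Q = lc A (\<lambda>x. fr A m P x + fr A m Q x) (words m)"
    using fr[OF assms(1), of P] fr[OF assms(1), of Q] by (simp add: lc_def mscale_addc sum.distrib)
  then show ?thesis
    using ext_lc[OF assms] by (simp add: ext_def mscale_addc sum.distrib)
qed

lemma ext_scale:
  fixes A :: "'d::finite \<Rightarrow> complex^'D::finite^'D"
  assumes "spans A m" "NK A m f"
  shows "ext A m f (mscale c P) = mscale c (ext A m f P)"
proof -
  have "mscale c P = mscale c (lc A (fr A m P) (words m))"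
    using fr[OF assms(1), of P] by metis
  also have "\<dots> = lc A (\<lambda>x. c * fr A m P x) (words m)"
    by (simp add: lc_def mscale_sum mscale_mscale)
  finally have "mscale c P = lc A (\<lambda>x. c * fr A m P x) (words m)" .
  then show ?thesis
    using ext_lc[OF assms] by (simp add: ext_def mscale_sum mscale_mscale)
qed

lemma ext_sum:
  fixes A :: "'d::finite \<Rightarrow> complex^'D::finite^'D"
  assumes "spans A m" "NK A m f"
  shows "ext A m f (sum F S) = (\<Sum>i\<in>S. ext A m f (F i))"
proof (induct S rule: infinite_finite_induct)
  case (infinite S) then show ?case using ext_scale[OF assms, of 0 0] by simp
next
  case empty then show ?case using ext_scale[OF assms, of 0 0] by simp
next
  case (insert x F) then show ?case by (simp add: ext_add[OF assms])
qed


definition Psi :: "('d \<Rightarrow> complex^'D^'D) \<Rightarrow> ('d list \<Rightarrow> complex^'D^'D) \<Rightarrow> nat \<Rightarrow> 'd list \<Rightarrow> complex^'D^'D" where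
  "Psi A X k s = (\<Sum>i<Suc (length s) - k. mprod A (take i s) ** X (take k (drop i s)) ** mprod A (drop (i+k) s))"

definition Gt :: "('d \<Rightarrow> complex^'D^'D) \<Rightarrow> ('d list \<Rightarrow> complex^'D^'D) \<Rightarrow> nat \<Rightarrow> 'd list \<Rightarrow> complex" where
  "Gt A X k ys = trace (X (take k ys) ** mprod A (drop k ys))"

definition Fc :: "('d \<Rightarrow> complex^'D^'D) \<Rightarrow> ('d list \<Rightarrow> complex^'D^'D) \<Rightarrow> nat \<Rightarrow> 'd list \<Rightarrow> complex" where
  "Fc A X k ys = (\<Sum>i<length ys. Gt A X k (rotate i ys))"

lemma sum_lessThan_add: "(\<Sum>i<m+(r::nat). f i) = (\<Sum>i<m. f i) + (\<Sum>j<r. f (m+j) :: 'a::comm_monoid_add)"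
  by (induct r) (simp_all add: add.assoc)

lemma Psi_short: "length s < k \<Longrightarrow> Psi A X k s = 0"
  by (simp add: Psi_def)

lemma Psi_single: "length s = k \<Longrightarrow> Psi A X k s = X s"
  by (simp add: Psi_def)

lemma Psi_Cons:
  "Psi A X k (a # s) = A a ** Psi A X k s +
     (if k \<le> Suc (length s) then X (take k (a # s)) ** mprod A (drop k (a # s)) else 0)"
proof (cases "k \<le> Suc (length s)")
  case True
  then have e: "Suc (length (a # s)) - k = Suc (Suc (length s) - k)" by simp
  show ?thesis
    unfolding Psi_def e sum.lessThan_Suc_shift
    by (simp add: True sum_mult_left matrix_mul_assoc add.commute)
next
  case False
  then show ?thesis by (simp add: Psi_def)
qed

lemma Psi_split:
  assumes k: "1 \<le> k" and w: "length w = k - 1"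
  shows "Psi A X k (p @ w @ q) = Psi A X k (p @ w) ** mprod A q + mprod A p ** Psi A X k (w @ q)"
proof (induct p)
  case Nil
  then show ?case using w k by (simp add: Psi_short)
next
  case (Cons a p)
  have le: "k \<le> Suc (length (p @ w))" using w by simp
  have t: "take k (a # p @ w @ q) = take k (a # p @ w)"
  proof -
    have "k - length (a # p @ w) = 0" using le by simp
    then show ?thesis using take_append[of k "a # p @ w" q] by simp
  qed
  have d: "drop k (a # p @ w @ q) = drop k (a # p @ w) @ q"
  proof -
    have "k - length (a # p @ w) = 0" using le by simp
    then show ?thesis using drop_append[of k "a # p @ w" q] by simp
  qed
  show ?case
    unfolding append_Cons Psi_Cons
    using le
    by (simp add: Cons t d mprod_append matrix_add_ldistrib add_mult_right matrix_mul_assoc)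
qed

lemma trace_rotate: "trace (mprod A (rotate n xs)) = trace (mprod A xs)"
proof -
  let ?j = "n mod length xs"
  have "trace (mprod A (rotate n xs)) = trace (mprod A (drop ?j xs) ** mprod A (take ?j xs))"
    by (simp add: rotate_drop_take mprod_append)
  also have "\<dots> = trace (mprod A (take ?j xs) ** mprod A (drop ?j xs))"
    by (rule trace_mul_sym)
  also have "\<dots> = trace (mprod A xs)"
    by (simp add: mprod_append[symmetric])
  finally show ?thesis .
qed

lemma sum_const_mat: "(\<Sum>i\<in>S. M) = mscale (of_nat (card S)) (M::complex^'n^'n)"
  by (induct S rule: infinite_finite_induct) (simp_all add: mscale_addc add.commute del: sum_constant)

lemma Psi_diff: "Psi A (\<lambda>w. X1 w - X2 w) k s = Psi A X1 k s - Psi A X2 k s"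
  by (simp add: Psi_def diff_mult_left diff_mult_right sum_subtractf)

lemma Psi_central:
  assumes cen: "\<And>M. D ** M = M ** D"
  shows "Psi A (\<lambda>w. D ** mprod A w) k s = mscale (of_nat (Suc (length s) - k)) (D ** mprod A s)"
proof -
  have "Psi A (\<lambda>w. D ** mprod A w) k s = (\<Sum>i<Suc (length s) - k. D ** mprod A s)"
    unfolding Psi_def
  proof (intro sum.cong refl)
    fix i assume "i \<in> {..<Suc (length s) - k}"
    have "s = take i s @ take k (drop i s) @ drop (i + k) s"
      by (metis append_take_drop_id drop_drop add.commute)
    then have "mprod A s = mprod A (take i s) ** mprod A (take k (drop i s)) ** mprod A (drop (i + k) s)"
      by (metis mprod_append matrix_mul_assoc)
    then show "mprod A (take i s) ** (D ** mprod A (take k (drop i s))) ** mprod A (drop (i + k) s) = D ** mprod A s"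
    proof -
      have "mprod A (take i s) ** (D ** mprod A (take k (drop i s))) = D ** (mprod A (take i s) ** mprod A (take k (drop i s)))"
        by (metis cen matrix_mul_assoc)
      then show ?thesis using \<open>mprod A s = _\<close> by (simp add: matrix_mul_assoc)
    qed
  qed
  then show ?thesis by (simp add: sum_const_mat del: sum_constant)
qed

lemma Gt_cob:
  fixes A :: "'d \<Rightarrow> complex^'D^'D"
  assumes k: "1 \<le> k" and len: "k \<le> length zs"
    and X: "X (take k zs) = A (hd (take k zs)) ** B (tl (take k zs)) - B (butlast (take k zs)) ** A (last (take k zs))"
  defines "g \<equiv> \<lambda>ys. trace (B (take (k - 1) ys) ** mprod A (drop (k - 1) ys))"
  shows "Gt A X k zs = g (rotate1 zs) - g zs"
proof -
  obtain a t where zs: "zs = a # t" using len k by (cases zs) auto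
  have lt: "k - 1 \<le> length t" using len zs by simp
  have hd: "hd (take k zs) = a" using k zs by (cases k) auto
  have tl: "tl (take k zs) = take (k - 1) t" using zs by (cases k) auto
  have bl: "butlast (take k zs) = take (k - 1) zs" using len by (simp add: butlast_take)
  have la: "last (take k zs) = zs ! (k - 1)"
  proof -
    have "take k zs \<noteq> []" using k len by (cases zs) auto
    then show ?thesis using k len by (simp add: last_conv_nth min_def)
  qed
  have dk: "drop (k - 1) zs = zs ! (k - 1) # drop k zs"
    using k len by (metis Cons_nth_drop_Suc Suc_diff_1 less_le_trans less_numeral_extra(1) diff_less)
  have dt: "drop k zs = drop (k - 1) t" using zs k by (cases k) auto
  have r1: "rotate1 zs = t @ [a]" using zs by simp
  have t1: "take (k - 1) (t @ [a]) = take (k - 1) t" using lt by simp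
  have d1: "drop (k - 1) (t @ [a]) = drop (k - 1) t @ [a]" using lt by simp
  have "Gt A X k zs = trace (A a ** B (take (k - 1) t) ** mprod A (drop k zs))
       - trace (B (take (k - 1) zs) ** A (zs ! (k - 1)) ** mprod A (drop k zs))"
    unfolding Gt_def X hd tl bl la by (simp add: diff_mult_right trace_sub)
  also have "trace (A a ** B (take (k - 1) t) ** mprod A (drop k zs)) = g (rotate1 zs)"
  proof -
    have "trace (A a ** B (take (k - 1) t) ** mprod A (drop k zs)) = trace (A a ** (B (take (k - 1) t) ** mprod A (drop k zs)))"
      by (simp add: matrix_mul_assoc)
    also have "\<dots> = trace (B (take (k - 1) t) ** mprod A (drop k zs) ** A a)"
      by (rule trace_mul_sym)
    also have "\<dots> = g (rotate1 zs)"
      unfolding g_def r1 t1 d1 dt by (simp add: mprod_snoc matrix_mul_assoc)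
    finally show ?thesis .
  qed
  also have "trace (B (take (k - 1) zs) ** A (zs ! (k - 1)) ** mprod A (drop k zs)) = g zs"
    unfolding g_def dk by (simp add: matrix_mul_assoc)
  finally show ?thesis .
qed

lemma Fc_cob:
  fixes A :: "'d \<Rightarrow> complex^'D^'D"
  assumes k: "1 \<le> k" and len: "k \<le> length ys"
    and X: "\<And>w. length w = k \<Longrightarrow> X w = A (hd w) ** B (tl w) - B (butlast w) ** A (last w)"
  shows "Fc A X k ys = 0"
proof -
  define g where "g \<equiv> \<lambda>ys. trace (B (take (k - 1) ys) ** mprod A (drop (k - 1) ys))"
  have "Gt A X k (rotate i ys) = g (rotate (Suc i) ys) - g (rotate i ys)" for i
  proof -
    have "Gt A X k (rotate i ys) = g (rotate1 (rotate i ys)) - g (rotate i ys)"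
      unfolding g_def by (rule Gt_cob[OF k]) (use len in \<open>auto intro: X\<close>)
    then show ?thesis by (simp add: rotate_rotate[of 1, simplified])
  qed
  then have "Fc A X k ys = (\<Sum>i<length ys. g (rotate (Suc i) ys) - g (rotate i ys))"
    unfolding Fc_def by (intro sum.cong refl) auto
  also have "\<dots> = g (rotate (length ys) ys) - g (rotate 0 ys)"
    by (rule sum_lessThan_telescope)
  also have "\<dots> = 0" by simp
  finally show ?thesis .
qed

lemma lemma_W:
  fixes A :: "'d \<Rightarrow> complex^'D^'D"
  assumes k: "1 \<le> k"
  shows "(\<Sum>i<Suc (length s) - k. Gt A X k (rotate i (s @ t))) = trace (Psi A X k s ** mprod A t)"
proof -
  have "Gt A X k (rotate i (s @ t)) = trace (mprod A (take i s) ** X (take k (drop i s)) ** mprod A (drop (i + k) s) ** mprod A t)"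
    if i: "i < Suc (length s) - k" for i
  proof -
    have ik: "i + k \<le> length s" using i by simp
    have il: "i < length (s @ t)" using ik k by simp
    have rot: "rotate i (s @ t) = drop i s @ t @ take i s"
      using il ik by (simp add: rotate_drop_take)
    have tk: "take k (drop i s @ t @ take i s) = take k (drop i s)" using ik by simp
    have dk: "drop k (drop i s @ t @ take i s) = drop (i + k) s @ t @ take i s" using ik by (simp add: add.commute)
    let ?Q = "mprod A (take i s)" and ?P = "X (take k (drop i s)) ** mprod A (drop (i + k) s) ** mprod A t"
    have "Gt A X k (rotate i (s @ t)) = trace (?P ** ?Q)"
      unfolding Gt_def rot tk dk by (simp add: mprod_append matrix_mul_assoc)
    also have "\<dots> = trace (?Q ** ?P)" by (rule trace_mul_sym)
    also have "\<dots> = trace (mprod A (take i s) ** X (take k (drop i s)) ** mprod A (drop (i + k) s) ** mprod A t)"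
      by (simp add: matrix_mul_assoc)
    finally show ?thesis .
  qed
  then have "(\<Sum>i<Suc (length s) - k. Gt A X k (rotate i (s @ t))) =
      (\<Sum>i<Suc (length s) - k. trace (mprod A (take i s) ** X (take k (drop i s)) ** mprod A (drop (i + k) s) ** mprod A t))"
    by (intro sum.cong refl) auto
  also have "\<dots> = trace (Psi A X k s ** mprod A t)"
    by (simp add: Psi_def sum_mult_right trace_sum)
  finally show ?thesis .
qed

lemma club:
  fixes A :: "'d \<Rightarrow> complex^'D^'D"
  assumes k: "1 \<le> k" and u: "length u = k - 1" and v: "length v = k - 1"
  shows "Fc A X k (u @ x @ v @ y) = trace (Psi A X k (u @ x @ v) ** mprod A y) + trace (Psi A X k (v @ y @ u) ** mprod A x)"
proof -
  let ?m = "length (u @ x)" and ?r = "length (v @ y)"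
  have len: "length (u @ x @ v @ y) = ?m + ?r" by simp
  have m: "?m = Suc (length (u @ x @ v)) - k" using u v k by simp
  have r: "?r = Suc (length (v @ y @ u)) - k" using u v k by simp
  have "Fc A X k (u @ x @ v @ y) = (\<Sum>i<?m. Gt A X k (rotate i (u @ x @ v @ y))) + (\<Sum>j<?r. Gt A X k (rotate (?m + j) (u @ x @ v @ y)))"
    unfolding Fc_def len by (rule sum_lessThan_add)
  also have "(\<Sum>i<?m. Gt A X k (rotate i (u @ x @ v @ y))) = trace (Psi A X k (u @ x @ v) ** mprod A y)"
    using lemma_W[OF k, where s="u @ x @ v" and t=y and X=X and A=A] unfolding m by simp
  also have "(\<Sum>j<?r. Gt A X k (rotate (?m + j) (u @ x @ v @ y))) = (\<Sum>j<?r. Gt A X k (rotate j ((v @ y @ u) @ x)))"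
  proof (intro sum.cong refl)
    fix j
    have "rotate (?m + j) (u @ x @ v @ y) = rotate j (rotate ?m ((u @ x) @ (v @ y)))"
      by (simp add: rotate_rotate add.commute)
    also have "\<dots> = rotate j ((v @ y) @ (u @ x))" by (simp only: rotate_append)
    finally show "Gt A X k (rotate (?m + j) (u @ x @ v @ y)) = Gt A X k (rotate j ((v @ y @ u) @ x))" by simp
  qed
  also have "\<dots> = trace (Psi A X k (v @ y @ u) ** mprod A x)"
    unfolding r by (rule lemma_W[OF k])
  finally show ?thesis .
qed

lemma NK_Psi:
  fixes A :: "'d::finite \<Rightarrow> complex^'D::finite^'D"
  assumes k: "1 \<le> k" and cyc: "\<And>ys. length ys = N \<Longrightarrow> Fc A X k ys = 0"
    and u: "length u = k - 1" and v: "length v = k - 1"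
    and sp: "spans A m" and N: "l + m + 2 * (k - 1) = N"
  shows "NK A l (\<lambda>x. Psi A X k (u @ x @ v))"
  unfolding NK_def
proof (intro allI impI)
  fix \<alpha> assume a0: "lc A \<alpha> (words l) = 0"
  define M where "M = (\<Sum>x\<in>words l. mscale (\<alpha> x) (Psi A X k (u @ x @ v)))"
  have tr: "trace (M ** mprod A y) = 0" if y: "length y = m" for y
  proof -
    have "trace (M ** mprod A y) = (\<Sum>x\<in>words l. \<alpha> x * trace (Psi A X k (u @ x @ v) ** mprod A y))"
      by (simp add: M_def sum_mult_right trace_sum mscale_left[symmetric] trace_mscale)
    also have "\<dots> = (\<Sum>x\<in>words l. - (\<alpha> x * trace (Psi A X k (v @ y @ u) ** mprod A x)))"
    proof (intro sum.cong refl)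
      fix x :: "'d list" assume "x \<in> words l"
      then have "length (u @ x @ v @ y) = N" using u v y N by simp
      then have "Fc A X k (u @ x @ v @ y) = 0" by (rule cyc)
      then show "\<alpha> x * trace (Psi A X k (u @ x @ v) ** mprod A y) = - (\<alpha> x * trace (Psi A X k (v @ y @ u) ** mprod A x))"
      proof -
        have "trace (Psi A X k (u @ x @ v) ** mprod A y) = - trace (Psi A X k (v @ y @ u) ** mprod A x)"
          using \<open>Fc A X k (u @ x @ v @ y) = 0\<close> unfolding club[OF k u v] by (simp add: eq_neg_iff_add_eq_0)
        then show ?thesis by simp
      qed
    qed
    also have "\<dots> = - trace (Psi A X k (v @ y @ u) ** lc A \<alpha> (words l))"
      by (simp add: lc_def sum_mult_left trace_sum mscale_right[symmetric] trace_mscale sum_negf)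
    also have "\<dots> = 0" using a0 by simp
    finally show ?thesis .
  qed
  have "trace (M ** P) = 0" for P
  proof -
    have "P = lc A (fr A m P) (words m)" by (rule fr[OF sp])
    then have "trace (M ** P) = trace (M ** lc A (fr A m P) (words m))" by simp
    also have "\<dots> = (\<Sum>y\<in>words m. fr A m P y * trace (M ** mprod A y))"
      by (simp add: lc_def sum_mult_left trace_sum mscale_right[symmetric] trace_mscale)
    finally have "trace (M ** P) = (\<Sum>y\<in>words m. fr A m P y * trace (M ** mprod A y))" .
    also have "\<dots> = 0" using tr by simp
    finally show ?thesis .
  qed
  then have "M = 0" by (rule trace_zero_all)
  then show "(\<Sum>x\<in>words l. mscale (\<alpha> x) (Psi A X k (u @ x @ v))) = 0" by (simp add: M_def)
qed


lemma length_site_update[simp]: "length (site_update N i js xs) = N"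
  by (simp add: site_update_def)

lemma window_rot:
  assumes "length xs = N" "k \<le> N" "i < N"
  shows "local_window N k i xs = take k (rotate i xs)"
  using assms by (intro nth_equalityI) (auto simp: local_window_def nth_rotate)

lemma update_rot:
  assumes len: "length xs = N" and js: "length js = k" and kN: "k \<le> N" and i: "i < N"
  shows "rotate i (site_update N i js xs) = js @ drop k (rotate i xs)"
proof (intro nth_equalityI)
  show "length (rotate i (site_update N i js xs)) = length (js @ drop k (rotate i xs))"
    using assms by simp
next
  fix p assume "p < length (rotate i (site_update N i js xs))"
  then have p: "p < N" by simp
  have q: "((i + p) mod N + N - i) mod N = p"
  proof -
    have "((i + p) mod N + N - i) mod N = ((i + p) mod N + (N - i)) mod N" using i by simp
    also have "\<dots> = ((i + p) + (N - i)) mod N" by (simp add: mod_add_left_eq)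
    also have "(i + p) + (N - i) = p + N" using i by simp
    finally show ?thesis using p by simp
  qed
  have "rotate i (site_update N i js xs) ! p = site_update N i js xs ! ((i + p) mod N)"
    using p by (simp add: nth_rotate)
  also have "\<dots> = (if p < k then js ! p else xs ! ((i + p) mod N))"
    using p len js q by (simp add: site_update_def)
  also have "\<dots> = (js @ drop k (rotate i xs)) ! p"
    using p len js kN by (auto simp: nth_append nth_rotate)
  finally show "rotate i (site_update N i js xs) ! p = (js @ drop k (rotate i xs)) ! p" .
qed

definition Xh :: "('d \<Rightarrow> complex^'D^'D) \<Rightarrow> ('d list \<Rightarrow> 'd list \<Rightarrow> complex) \<Rightarrow> nat \<Rightarrow> nat \<Rightarrow> complex \<Rightarrow> 'd list \<Rightarrow> complex^'D^'D" where
  "Xh A h k N E w = (\<Sum>js\<in>words k. mscale (h w js - (E / of_nat N) * (if w = js then 1 else 0)) (mprod A js))"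

lemma partA:
  fixes A :: "'d::finite \<Rightarrow> complex^'D::finite^'D"
  assumes len: "length xs = N" and k1: "1 \<le> k" and kN: "k \<le> N"
  shows "local_sum_op N k h (mps_state A N) xs - E * mps_state A N xs = Fc A (Xh A h k N E) k xs"
proof -
  define \<epsilon> where "\<epsilon> = E / of_nat N"
  have N0: "N > 0" using k1 kN by simp
  have per: "Gt A (Xh A h k N E) k (rotate i xs) =
      (\<Sum>js\<in>words k. h (local_window N k i xs) js * trace (mprod A (site_update N i js xs))) - \<epsilon> * trace (mprod A xs)"
    if i: "i < N" for i
  proof -
    let ?w = "take k (rotate i xs)" and ?R = "mprod A (drop k (rotate i xs))"
    have w: "?w \<in> words k" using len kN by simp
    have t1: "trace (mprod A js ** ?R) = trace (mprod A (site_update N i js xs))" if "js \<in> words k" for js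
    proof -
      have "trace (mprod A js ** ?R) = trace (mprod A (rotate i (site_update N i js xs)))"
        using update_rot[OF len _ kN i, of js] that by (simp add: mprod_append)
      also have "\<dots> = trace (mprod A (site_update N i js xs))" by (rule trace_rotate)
      finally show ?thesis .
    qed
    have t2: "trace (mprod A ?w ** ?R) = trace (mprod A xs)"
      by (simp add: mprod_append[symmetric] trace_rotate)
    have "Gt A (Xh A h k N E) k (rotate i xs) =
        (\<Sum>js\<in>words k. (h ?w js - \<epsilon> * (if ?w = js then 1 else 0)) * trace (mprod A js ** ?R))"
      by (simp add: Gt_def Xh_def \<epsilon>_def sum_mult_right trace_sum mscale_left[symmetric] trace_mscale)
    also have "\<dots> = (\<Sum>js\<in>words k. h ?w js * trace (mprod A js ** ?R) -
        \<epsilon> * (if ?w = js then trace (mprod A js ** ?R) else 0))"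
      by (intro sum.cong refl) (simp add: algebra_simps)
    also have "\<dots> = (\<Sum>js\<in>words k. h ?w js * trace (mprod A js ** ?R)) -
        (\<Sum>js\<in>words k. \<epsilon> * (if ?w = js then trace (mprod A js ** ?R) else 0))"
      by (rule sum_subtractf)
    also have "(\<Sum>js\<in>words k. \<epsilon> * (if ?w = js then trace (mprod A js ** ?R) else 0)) = \<epsilon> * trace (mprod A xs)"
      using w t2 by (simp add: sum_distrib_left[symmetric] sum.delta)
    also have "(\<Sum>js\<in>words k. h ?w js * trace (mprod A js ** ?R)) =
        (\<Sum>js\<in>words k. h (local_window N k i xs) js * trace (mprod A (site_update N i js xs)))"
      using t1 window_rot[OF len kN i] by simp
    finally show ?thesis .
  qed
  have "Fc A (Xh A h k N E) k xs = (\<Sum>i<N. (\<Sum>js\<in>words k. h (local_window N k i xs) js * trace (mprod A (site_update N i js xs))) - \<epsilon> * trace (mprod A xs))"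
    unfolding Fc_def len by (intro sum.cong refl) (simp add: per)
  also have "\<dots> = (\<Sum>i<N. \<Sum>js\<in>words k. h (local_window N k i xs) js * trace (mprod A (site_update N i js xs))) - of_nat N * \<epsilon> * trace (mprod A xs)"
    by (simp add: sum_subtractf)
  also have "of_nat N * \<epsilon> = E" using N0 by (simp add: \<epsilon>_def)
  finally show ?thesis
    using len by (simp add: local_sum_op_def mps_state_def)
qed


definition lin :: "(complex^'n^'n \<Rightarrow> complex^'n^'n) \<Rightarrow> bool" where
  "lin f \<longleftrightarrow> (\<forall>P Q. f (P + Q) = f P + f Q) \<and> (\<forall>c P. f (mscale c P) = mscale c (f P))"

lemma lin_add: "lin f \<Longrightarrow> f (P + Q) = f P + f Q" by (simp add: lin_def)
lemma lin_scale: "lin f \<Longrightarrow> f (mscale c P) = mscale c (f P)" by (simp add: lin_def)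
lemma lin_zero: "lin f \<Longrightarrow> f 0 = 0"
  using lin_scale[of f 0 0] by simp
lemma lin_sum: "lin f \<Longrightarrow> f (sum g S) = (\<Sum>i\<in>S. f (g i))"
  by (induct S rule: infinite_finite_induct) (simp_all add: lin_zero lin_add)
lemma lin_neg: "lin f \<Longrightarrow> f (- P) = - f P"
  using lin_scale[of f "-1" P] by (simp add: mscale_minus)
lemma lin_diff: "lin f \<Longrightarrow> f (P - Q) = f P - f Q"
  using lin_add[of f P "- Q"] lin_neg[of f Q] by simp

lemma lin_lc: "lin f \<Longrightarrow> f (lc A \<alpha> S) = (\<Sum>x\<in>S. mscale (\<alpha> x) (f (mprod A x)))"
  by (simp add: lc_def lin_sum lin_scale)

lemma lin_ext:
  assumes "lin f" "lin g" "spans A m" "\<And>x. x \<in> words m \<Longrightarrow> f (mprod A x) = g (mprod A x)"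
  shows "f P = g P"
proof -
  have "P = lc A (fr A m P) (words m)" by (rule fr[OF assms(3)])
  then have "f P = f (lc A (fr A m P) (words m))" "g P = g (lc A (fr A m P) (words m))" by simp_all
  then show ?thesis using assms by (simp add: lin_lc)
qed

lemma lin_id: "lin (\<lambda>P. P)" by (simp add: lin_def)
lemma lin_lmul: "lin f \<Longrightarrow> lin (\<lambda>P. M ** f P)"
  by (simp add: lin_def matrix_add_ldistrib mscale_right)
lemma lin_rmul: "lin f \<Longrightarrow> lin (\<lambda>P. f P ** M)"
  by (simp add: lin_def add_mult_right mscale_left)
lemma lin_comp_l: "lin f \<Longrightarrow> lin (\<lambda>P. f (M ** P))"
  by (simp add: lin_def matrix_add_ldistrib mscale_right[symmetric])
lemma lin_comp_r: "lin f \<Longrightarrow> lin (\<lambda>P. f (P ** M))"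
  by (simp add: lin_def add_mult_right mscale_left[symmetric])
lemma lin_plus: "lin f \<Longrightarrow> lin g \<Longrightarrow> lin (\<lambda>P. f P + g P)"
  by (simp add: lin_def mscale_add algebra_simps)
lemma lin_minus: "lin f \<Longrightarrow> lin g \<Longrightarrow> lin (\<lambda>P. f P - g P)"
  by (simp add: lin_def mscale_diff algebra_simps)
lemma lin_mscale: "lin f \<Longrightarrow> lin (\<lambda>P. mscale c (f P))"
  by (simp add: lin_def mscale_add mscale_mscale mult.commute)
lemma lin_sumf: "(\<And>i. i \<in> S \<Longrightarrow> lin (f i)) \<Longrightarrow> lin (\<lambda>P. \<Sum>i\<in>S. f i P)"
  by (simp add: lin_def sum.distrib mscale_sum)

lemma lin_mul_both: "lin (\<lambda>P. M ** P ** N)"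
  by (simp add: lin_def matrix_add_ldistrib add_mult_right mscale_left[symmetric] mscale_right[symmetric])

lemma munit_nth: "munit a b $ i $ j = (if i = a \<and> j = b then 1 else 0)"
  by (simp add: munit_def)

lemma munit_mult: "munit a b ** munit c d = (if b = c then munit a d else (0::complex^'n^'n))"
proof -
  have "(munit a b ** munit c d) $ i $ j = (if b = c then munit a d else 0) $ i $ j" for i j
  proof -
    have "(munit a b ** munit c d :: complex^'n^'n) $ i $ j = (\<Sum>t\<in>UNIV. (if i = a \<and> t = b then 1 else 0) * (if t = c \<and> j = d then 1 else 0))"
      by (simp add: matrix_matrix_mult_def munit_nth)
    also have "\<dots> = (\<Sum>t\<in>UNIV. if t = b then (if i = a \<and> b = c \<and> j = d then 1 else 0) else (0::complex))"
      by (intro sum.cong refl) auto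
    also have "\<dots> = (if b = c then munit a d else 0) $ i $ j"
      by (simp add: munit_nth)
    finally show ?thesis .
  qed
  then show ?thesis by (simp add: vec_eq_iff)
qed

lemma munit_mult_assoc: "M ** munit a b ** munit c d = (if b = c then M ** munit a d else (0::complex^'n^'n))"
  by (simp add: matrix_mul_assoc[symmetric] munit_mult)

lemma munit_sum_id: "(\<Sum>j\<in>UNIV. munit j r ** munit r j) = (mat 1 :: complex^'n^'n)"
proof -
  have "(\<Sum>j\<in>UNIV. munit j r ** munit r j) = (\<Sum>j\<in>UNIV. munit j j :: complex^'n^'n)"
    by (simp add: munit_mult)
  also have "\<dots> = mat 1"
  proof -
    have "(\<Sum>j\<in>UNIV. munit j j :: complex^'n^'n) $ a $ b = mat 1 $ a $ b" for a b
    proof -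
      have "(\<Sum>j\<in>UNIV. munit j j :: complex^'n^'n) $ a $ b = (\<Sum>j\<in>UNIV. if j = a then (if a = b then 1 else 0) else (0::complex))"
      proof -
        have "munit j j $ a $ b = (if j = a then (if a = b then 1 else 0) else (0::complex))" for j :: 'n
          by (auto simp: munit_nth)
        then show ?thesis by (simp add: sum_component)
      qed
      also have "\<dots> = mat 1 $ a $ b" by (simp add: mat_def)
      finally show ?thesis .
    qed
    then show ?thesis by (simp add: vec_eq_iff)
  qed
  finally show ?thesis .
qed

lemma mat_munit_expand: "P = (\<Sum>a\<in>UNIV. \<Sum>b\<in>UNIV. mscale (P $ a $ b) (munit a b :: complex^'n^'n))"
proof -
  have "(\<Sum>a\<in>UNIV. \<Sum>b\<in>UNIV. mscale (P $ a $ b) (munit a b :: complex^'n^'n)) $ i $ j = P $ i $ j" for i j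
  proof -
    have "(\<Sum>a\<in>UNIV. \<Sum>b\<in>UNIV. mscale (P $ a $ b) (munit a b :: complex^'n^'n)) $ i $ j
        = (\<Sum>a\<in>UNIV. \<Sum>b\<in>UNIV. if a = i then (if b = j then P $ a $ b else 0) else 0)"
    proof -
      have "mscale (P $ a $ b) (munit a b :: complex^'n^'n) $ i $ j = (if a = i then (if b = j then P $ a $ b else 0) else 0)" for a b
        by (auto simp: munit_nth)
      then show ?thesis by (simp add: sum_component)
    qed
    also have "\<dots> = (\<Sum>a\<in>UNIV. if a = i then (\<Sum>b\<in>UNIV. if b = j then P $ a $ b else 0) else 0)"
      by (intro sum.cong refl) auto
    also have "\<dots> = P $ i $ j"
      by simp
    finally show ?thesis .
  qed
  then show ?thesis by (simp add: vec_eq_iff)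
qed

lemma inner_derivation:
  fixes der :: "complex^'n^'n \<Rightarrow> complex^'n^'n"
  assumes lin: "lin der" and leib: "\<And>P Q. der (P ** Q) = der P ** Q + P ** der Q"
  shows "\<exists>G. \<forall>P. der P = G ** P - P ** G"
proof -
  define r where "r = (undefined :: 'n)"
  define G where "G = (\<Sum>j\<in>UNIV. der (munit j r) ** munit r j)"
  have E: "E = 0" if "E = E + E" for E :: "complex^'n^'n" using that by simp
  have z: "munit r r ** der (munit r r) ** munit r r = 0"
  proof -
    have "der (munit r r) = der (munit r r) ** munit r r + munit r r ** der (munit r r)"
      using leib[of "munit r r" "munit r r"] by (simp add: munit_mult)
    then have "munit r r ** der (munit r r) ** munit r r =
        munit r r ** (der (munit r r) ** munit r r + munit r r ** der (munit r r)) ** munit r r"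
      by simp
    also have "\<dots> = munit r r ** der (munit r r) ** munit r r + munit r r ** der (munit r r) ** munit r r"
      by (simp add: matrix_add_ldistrib add_mult_right matrix_mul_assoc munit_mult munit_mult_assoc)
    finally show ?thesis by (rule E)
  qed
  have unit: "der (munit a b) = G ** munit a b - munit a b ** G" for a b
  proof -
    have GE: "G ** munit a b = der (munit a r) ** munit r b"
    proof -
      have "G ** munit a b = (\<Sum>j\<in>UNIV. der (munit j r) ** (munit r j ** munit a b))"
        by (simp add: G_def sum_mult_right matrix_mul_assoc)
      also have "\<dots> = (\<Sum>j\<in>UNIV. if j = a then der (munit j r) ** munit r b else 0)"
        by (intro sum.cong refl) (simp add: munit_mult)
      also have "\<dots> = der (munit a r) ** munit r b" by simp
      finally show ?thesis .
    qed
    have key: "munit a r ** der (munit r b) + munit a b ** G = 0"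
    proof -
      have eq: "der (munit r b) ** munit j r + munit r b ** der (munit j r) = (if b = j then der (munit r r) else 0)" for j
        using leib[of "munit r b" "munit j r"] by (auto simp: munit_mult lin_zero[OF lin])
      have "(\<Sum>j\<in>UNIV. munit a r ** (der (munit r b) ** munit j r + munit r b ** der (munit j r)) ** munit r j)
          = (\<Sum>j\<in>UNIV. munit a r ** (if b = j then der (munit r r) else 0) ** munit r j)"
        by (simp add: eq)
      also have "\<dots> = (\<Sum>j\<in>UNIV. if j = b then munit a r ** der (munit r r) ** munit r b else 0)"
        by (intro sum.cong refl) auto
      also have "\<dots> = munit a r ** der (munit r r) ** munit r b"
        by simp
      also have "\<dots> = munit a r ** (munit r r ** der (munit r r) ** munit r r) ** munit r b"
        by (simp add: matrix_mul_assoc munit_mult munit_mult_assoc)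
      also have "\<dots> = 0" by (simp add: z)
      finally have s0: "(\<Sum>j\<in>UNIV. munit a r ** (der (munit r b) ** munit j r + munit r b ** der (munit j r)) ** munit r j) = 0" .
      have "(\<Sum>j\<in>UNIV. munit a r ** (der (munit r b) ** munit j r + munit r b ** der (munit j r)) ** munit r j)
          = (\<Sum>j\<in>UNIV. munit a r ** der (munit r b) ** munit j j) + (\<Sum>j\<in>UNIV. munit a b ** der (munit j r) ** munit r j)"
        by (simp add: matrix_add_ldistrib add_mult_right sum.distrib matrix_mul_assoc munit_mult munit_mult_assoc)
      also have "\<dots> = munit a r ** der (munit r b) ** (\<Sum>j\<in>UNIV. munit j r ** munit r j) + munit a b ** G"
        by (simp add: sum_mult_left G_def matrix_mul_assoc munit_mult)
      also have "\<dots> = munit a r ** der (munit r b) + munit a b ** G"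
        by (simp add: munit_sum_id)
      finally show ?thesis using s0 by simp
    qed
    have "der (munit a b) = der (munit a r ** munit r b)" by (simp add: munit_mult)
    also have "\<dots> = der (munit a r) ** munit r b + munit a r ** der (munit r b)" by (rule leib)
    also have "\<dots> = G ** munit a b - munit a b ** G" using GE key by (simp add: eq_neg_iff_add_eq_0 add.commute)
    finally show ?thesis .
  qed
  have "der P = G ** P - P ** G" for P
  proof -
    have "der P = der (\<Sum>a\<in>UNIV. \<Sum>b\<in>UNIV. mscale (P $ a $ b) (munit a b))"
      using mat_munit_expand[of P] by metis
    also have "\<dots> = (\<Sum>a\<in>UNIV. \<Sum>b\<in>UNIV. mscale (P $ a $ b) (G ** munit a b - munit a b ** G))"
      by (simp add: lin_sum[OF lin] lin_scale[OF lin] unit)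
    also have "\<dots> = G ** (\<Sum>a\<in>UNIV. \<Sum>b\<in>UNIV. mscale (P $ a $ b) (munit a b)) - (\<Sum>a\<in>UNIV. \<Sum>b\<in>UNIV. mscale (P $ a $ b) (munit a b)) ** G"
      by (simp add: sum_mult_left sum_mult_right mscale_diff mscale_left[symmetric] mscale_right[symmetric] sum_subtractf)
    also have "\<dots> = G ** P - P ** G" using mat_munit_expand[of P] by metis
    finally show ?thesis .
  qed
  then show ?thesis by blast
qed


lemma mprod_take_drop: "mprod A x = mprod A (take j x) ** mprod A (drop j x)"
  by (simp add: mprod_append[symmetric])

lemma cancel_lemma:
  fixes A :: "'d::finite \<Rightarrow> complex^'D::finite^'D"
  assumes sp: "spans A n" and kn: "k - 1 \<le> n"
    and h: "\<And>u v. length u = k - 1 \<Longrightarrow> length v = k - 1 \<Longrightarrow> mprod A u ** M ** mprod A v = 0"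
  shows "M = 0"
proof -
  obtain \<alpha> where I: "mat 1 = lc A \<alpha> (words n)" using sp unfolding spans_def by blast
  have z: "mprod A y ** M ** mprod A y' = 0" if "y \<in> words n" "y' \<in> words n" for y y'
  proof -
    have "mprod A y ** M ** mprod A y' =
      mprod A (take (n - (k - 1)) y) ** (mprod A (drop (n - (k - 1)) y) ** M ** mprod A (take (k - 1) y')) ** mprod A (drop (k - 1) y')"
      using mprod_take_drop[of A y "n - (k - 1)"] mprod_take_drop[of A y' "k - 1"] by (simp add: matrix_mul_assoc)
    also have "mprod A (drop (n - (k - 1)) y) ** M ** mprod A (take (k - 1) y') = 0"
      using that kn by (intro h) auto
    finally show ?thesis by simp
  qed
  have "M = mat 1 ** M ** mat 1" by simp
  also have "\<dots> = (\<Sum>i\<in>words n. mscale (\<alpha> i) (\<Sum>ia\<in>words n. mscale (\<alpha> ia) (mprod A ia ** M ** mprod A i)))"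
    unfolding I lc_def
    by (simp add: sum_mult_left sum_mult_right mscale_left[symmetric] mscale_right[symmetric] matrix_mul_assoc)
  also have "\<dots> = 0"
    by (intro sum.neutral ballI) (simp add: z)
  finally show ?thesis .
qed

lemma structure_thm:
  fixes A :: "'d::finite \<Rightarrow> complex^'D::finite^'D"
    and \<delta> :: "'d list \<Rightarrow> 'd list \<Rightarrow> complex^'D^'D \<Rightarrow> complex^'D^'D"
  assumes sp: "spans A n" and kn: "k - 1 \<le> n"
    and lin: "\<And>u v. length u = k - 1 \<Longrightarrow> length v = k - 1 \<Longrightarrow> lin (\<delta> u v)"
    and GD: "\<And>u v w P Q. length u = k - 1 \<Longrightarrow> length v = k - 1 \<Longrightarrow> length w = k - 1 \<Longrightarrow>
       \<delta> u v (P ** mprod A w ** Q) = \<delta> u w P ** Q ** mprod A v + mprod A u ** P ** \<delta> w v Q"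
  shows "\<exists>B. \<forall>u v P. length u = k - 1 \<longrightarrow> length v = k - 1 \<longrightarrow>
            \<delta> u v P = mprod A u ** P ** B v - B u ** P ** mprod A v"
proof -
  obtain \<alpha> where I: "mat 1 = lc A \<alpha> (words n)" using sp unfolding spans_def by blast
  define S where "S = (words n :: 'd list set)"
  define lw where "lw x = take (k - 1) x" for x :: "'d list"
  define lq where "lq x = mscale (\<alpha> x) (mprod A (drop (k - 1) x))" for x
  define rw where "rw x = drop (n - (k - 1)) x" for x :: "'d list"
  define rp where "rp x = mscale (\<alpha> x) (mprod A (take (n - (k - 1)) x))" for x
  have finS: "finite S" by (simp add: S_def)
  have lwl: "length (lw x) = k - 1" if "x \<in> S" for x using that kn by (simp add: S_def lw_def)
  have rwl: "length (rw x) = k - 1" if "x \<in> S" for x using that kn by (simp add: S_def rw_def)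
  have Lf: "(\<Sum>x\<in>S. mprod A (lw x) ** lq x) = mat 1"
    unfolding I lc_def S_def lw_def lq_def
    by (intro sum.cong refl) (simp add: mscale_right[symmetric] mprod_take_drop[symmetric])
  have Rf: "(\<Sum>x\<in>S. rp x ** mprod A (rw x)) = mat 1"
    unfolding I lc_def S_def rw_def rp_def
    by (intro sum.cong refl) (simp add: mscale_left[symmetric] mprod_take_drop[symmetric])
  define al where "al u = (\<Sum>j\<in>S. \<delta> u (rw j) (rp j))" for u
  define be where "be v = (\<Sum>i\<in>S. \<delta> (lw i) v (lq i))" for v
  define C where "C P = (\<Sum>j\<in>S. \<Sum>i\<in>S. rp j ** \<delta> (rw j) (lw i) P ** lq i)" for P
  have linC: "lin C"
    unfolding C_def[abs_def]
    by (intro lin_sumf lin_rmul lin_lmul lin) (auto simp: rwl lwl)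
  have C1: "\<delta> u v P = mprod A u ** P ** be v + al u ** P ** mprod A v + mprod A u ** C P ** mprod A v"
    if u: "length u = k - 1" and v: "length v = k - 1" for u v P
  proof -
    have "P = mat 1 ** P ** mat 1" by simp
    also have "\<dots> = (\<Sum>j\<in>S. rp j ** mprod A (rw j)) ** P ** (\<Sum>i\<in>S. mprod A (lw i) ** lq i)"
      by (simp add: Rf Lf)
    also have "\<dots> = (\<Sum>j\<in>S. \<Sum>i\<in>S. rp j ** mprod A (rw j) ** (P ** mprod A (lw i) ** lq i))"
      by (simp add: sum_mult_left sum_mult_right matrix_mul_assoc) (rule sum.swap)
    finally have Pe: "P = (\<Sum>j\<in>S. \<Sum>i\<in>S. rp j ** mprod A (rw j) ** (P ** mprod A (lw i) ** lq i))" .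
    have trm: "\<delta> u v (rp j ** mprod A (rw j) ** (P ** mprod A (lw i) ** lq i)) =
        \<delta> u (rw j) (rp j) ** P ** mprod A (lw i) ** lq i ** mprod A v
      + mprod A u ** (rp j ** \<delta> (rw j) (lw i) P ** lq i) ** mprod A v
      + mprod A u ** rp j ** mprod A (rw j) ** P ** \<delta> (lw i) v (lq i)"
      if "j \<in> S" "i \<in> S" for i j
    proof -
      have g1: "\<delta> u v (rp j ** mprod A (rw j) ** (P ** mprod A (lw i) ** lq i)) =
          \<delta> u (rw j) (rp j) ** (P ** mprod A (lw i) ** lq i) ** mprod A v + mprod A u ** rp j ** \<delta> (rw j) v (P ** mprod A (lw i) ** lq i)"
        by (rule GD) (use u v that rwl in auto)
      have g2: "\<delta> (rw j) v (P ** mprod A (lw i) ** lq i) = \<delta> (rw j) (lw i) P ** lq i ** mprod A v + mprod A (rw j) ** P ** \<delta> (lw i) v (lq i)"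
        by (rule GD) (use u v that rwl lwl in auto)
      show ?thesis unfolding g1 g2
        by (simp add: matrix_add_ldistrib matrix_mul_assoc add.assoc)
    qed
    have "\<delta> u v P = (\<Sum>j\<in>S. \<Sum>i\<in>S. \<delta> u v (rp j ** mprod A (rw j) ** (P ** mprod A (lw i) ** lq i)))"
      by (subst Pe) (simp add: lin_sum[OF lin[OF u v]])
    also have "\<dots> = (\<Sum>j\<in>S. \<Sum>i\<in>S. \<delta> u (rw j) (rp j) ** P ** mprod A (lw i) ** lq i ** mprod A v)
      + (\<Sum>j\<in>S. \<Sum>i\<in>S. mprod A u ** (rp j ** \<delta> (rw j) (lw i) P ** lq i) ** mprod A v)
      + (\<Sum>j\<in>S. \<Sum>i\<in>S. mprod A u ** rp j ** mprod A (rw j) ** P ** \<delta> (lw i) v (lq i))"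
      by (simp add: trm sum.distrib)
    also have "(\<Sum>j\<in>S. \<Sum>i\<in>S. \<delta> u (rw j) (rp j) ** P ** mprod A (lw i) ** lq i ** mprod A v) = al u ** P ** mprod A v"
    proof -
      have "al u ** P ** mprod A v = al u ** P ** (\<Sum>i\<in>S. mprod A (lw i) ** lq i) ** mprod A v" by (simp add: Lf)
      then show ?thesis by (simp add: al_def sum_mult_left sum_mult_right matrix_mul_assoc) (rule sum.swap)
    qed
    also have "(\<Sum>j\<in>S. \<Sum>i\<in>S. mprod A u ** (rp j ** \<delta> (rw j) (lw i) P ** lq i) ** mprod A v) = mprod A u ** C P ** mprod A v"
      by (simp add: C_def sum_mult_left sum_mult_right)
    also have "(\<Sum>j\<in>S. \<Sum>i\<in>S. mprod A u ** rp j ** mprod A (rw j) ** P ** \<delta> (lw i) v (lq i)) = mprod A u ** P ** be v"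
    proof -
      have "mprod A u ** P ** be v = mprod A u ** (\<Sum>j\<in>S. rp j ** mprod A (rw j)) ** P ** be v" by (simp add: Rf)
      then show ?thesis by (simp add: be_def sum_mult_left sum_mult_right matrix_mul_assoc) (rule sum.swap)
    qed
    finally show ?thesis by (simp add: add_ac)
  qed
  have cancel: "M = 0" if "\<And>u v. length u = k - 1 \<Longrightarrow> length v = k - 1 \<Longrightarrow> mprod A u ** M ** mprod A v = 0" for M
    by (rule cancel_lemma[OF sp kn that])
  have C2: "C (P ** mprod A w ** Q) = C P ** mprod A w ** Q + P ** mprod A w ** C Q + P ** (al w + be w) ** Q"
    if w: "length w = k - 1" for w P Q
  proof -
    have "C (P ** mprod A w ** Q) - (C P ** mprod A w ** Q + P ** mprod A w ** C Q + P ** (al w + be w) ** Q) = 0"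
    proof (rule cancel)
      fix u v :: "'d list" assume u: "length u = k - 1" and v: "length v = k - 1"
      have gd: "\<delta> u v (P ** mprod A w ** Q) = \<delta> u w P ** Q ** mprod A v + mprod A u ** P ** \<delta> w v Q"
        by (rule GD[OF u v w])
      have "mprod A u ** (C (P ** mprod A w ** Q) - (C P ** mprod A w ** Q + P ** mprod A w ** C Q + P ** (al w + be w) ** Q)) ** mprod A v
         = \<delta> u v (P ** mprod A w ** Q) - (\<delta> u w P ** Q ** mprod A v + mprod A u ** P ** \<delta> w v Q)"
        unfolding C1[OF u v] C1[OF u w] C1[OF w v]
        by (simp add: matrix_add_ldistrib add_mult_right diff_mult_left diff_mult_right matrix_mul_assoc algebra_simps)
      also have "\<dots> = 0" using gd by simp
      finally show "mprod A u ** (C (P ** mprod A w ** Q) - (C P ** mprod A w ** Q + P ** mprod A w ** C Q + P ** (al w + be w) ** Q)) ** mprod A v = 0" .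
    qed
    then show ?thesis by simp
  qed
  define C0 where "C0 = C (mat 1)"
  have C3a: "C (P ** mprod A w ** Q) = C P ** mprod A w ** Q + P ** C (mprod A w ** Q) - P ** C0 ** mprod A w ** Q"
    if w: "length w = k - 1" for w P Q
  proof -
    have "C (mat 1 ** mprod A w ** Q) = C0 ** mprod A w ** Q + mat 1 ** mprod A w ** C Q + mat 1 ** (al w + be w) ** Q"
      unfolding C0_def by (rule C2[OF w])
    then have e: "C (mprod A w ** Q) = C0 ** mprod A w ** Q + mprod A w ** C Q + (al w + be w) ** Q" by simp
    show ?thesis unfolding C2[OF w] e
      by (simp add: matrix_add_ldistrib matrix_mul_assoc algebra_simps)
  qed
  have C3: "C (P ** R) = C P ** R + P ** C R - P ** C0 ** R" for P R
  proof -
    have Re: "R = (\<Sum>i\<in>S. mprod A (lw i) ** (lq i ** R))"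
    proof -
      have "R = (\<Sum>i\<in>S. mprod A (lw i) ** lq i) ** R" by (simp add: Lf)
      then show ?thesis by (simp add: sum_mult_right matrix_mul_assoc)
    qed
    have "C (P ** R) = (\<Sum>i\<in>S. C (P ** mprod A (lw i) ** (lq i ** R)))"
      by (subst Re) (simp add: sum_mult_left lin_sum[OF linC] matrix_mul_assoc)
    also have "\<dots> = (\<Sum>i\<in>S. C P ** mprod A (lw i) ** lq i ** R + P ** C (mprod A (lw i) ** (lq i ** R)) - P ** C0 ** mprod A (lw i) ** lq i ** R)"
    proof (intro sum.cong refl)
      fix i assume "i \<in> S"
      from C3a[OF lwl[OF this], of P "lq i ** R"]
      show "C (P ** mprod A (lw i) ** (lq i ** R)) = C P ** mprod A (lw i) ** lq i ** R + P ** C (mprod A (lw i) ** (lq i ** R)) - P ** C0 ** mprod A (lw i) ** lq i ** R"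
        by (simp add: matrix_mul_assoc)
    qed
    also have "\<dots> = C P ** (\<Sum>i\<in>S. mprod A (lw i) ** lq i) ** R + P ** C (\<Sum>i\<in>S. mprod A (lw i) ** (lq i ** R)) - P ** C0 ** (\<Sum>i\<in>S. mprod A (lw i) ** lq i) ** R"
      by (simp add: sum.distrib sum_subtractf sum_mult_left sum_mult_right lin_sum[OF linC] matrix_mul_assoc)
    also have "\<dots> = C P ** R + P ** C R - P ** C0 ** R"
      using Re by (simp add: Lf)
    finally show ?thesis .
  qed
  define der where "der P = C P - C0 ** P" for P
  have linder: "lin der"
    unfolding der_def[abs_def] by (intro lin_minus linC lin_lmul lin_id)
  have leib: "der (P ** R) = der P ** R + P ** der R" for P R
    unfolding der_def C3 by (simp add: diff_mult_left diff_mult_right matrix_mul_assoc algebra_simps)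
  obtain G where G: "\<And>P. der P = G ** P - P ** G"
    using inner_derivation[OF linder leib] by blast
  have CG: "C P = C0 ** P + G ** P - P ** G" for P
    using G[of P] unfolding der_def by (simp add: algebra_simps)
  define B1 where "B1 v = be v - G ** mprod A v" for v
  define B2 where "B2 u = al u + mprod A u ** (C0 + G)" for u
  have F1: "\<delta> u v P = mprod A u ** P ** B1 v + B2 u ** P ** mprod A v"
    if u: "length u = k - 1" and v: "length v = k - 1" for u v P
    unfolding C1[OF u v] CG B1_def B2_def
    by (simp add: matrix_add_ldistrib add_mult_right diff_mult_left diff_mult_right matrix_mul_assoc algebra_simps)
  have F2: "B2 w = - B1 w" if w: "length w = k - 1" for w
  proof -
    have "B1 w + B2 w = 0"
    proof (rule cancel)
      fix u v :: "'d list" assume u: "length u = k - 1" and v: "length v = k - 1"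
      have gd: "\<delta> u v (mat 1 ** mprod A w ** mat 1) = \<delta> u w (mat 1) ** mat 1 ** mprod A v + mprod A u ** mat 1 ** \<delta> w v (mat 1)"
        by (rule GD[OF u v w])
      have "mprod A u ** (B1 w + B2 w) ** mprod A v =
          (\<delta> u w (mat 1) ** mat 1 ** mprod A v + mprod A u ** mat 1 ** \<delta> w v (mat 1)) - \<delta> u v (mat 1 ** mprod A w ** mat 1)"
        unfolding F1[OF u v] F1[OF u w] F1[OF w v]
        by (simp add: matrix_add_ldistrib add_mult_right matrix_mul_assoc algebra_simps)
      also have "\<dots> = 0" using gd by simp
      finally show "mprod A u ** (B1 w + B2 w) ** mprod A v = 0" .
    qed
    then show ?thesis by (simp add: eq_neg_iff_add_eq_0 add.commute)
  qed
  show ?thesis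
  proof (intro exI allI impI)
    fix u v :: "'d list" and P assume u: "length u = k - 1" and v: "length v = k - 1"
    show "\<delta> u v P = mprod A u ** P ** B1 v - B1 u ** P ** mprod A v"
      unfolding F1[OF u v] F2[OF u] by (simp add: neg_mult)
  qed
qed


lemma Psi_peel:
  assumes k: "1 \<le> k" and z: "length z = k"
  shows "Psi A X k (z @ y) = X z ** mprod A y + A (hd z) ** Psi A X k (tl z @ y)"
proof -
  have zne: "z \<noteq> []" using k z by auto
  have "Psi A X k ([hd z] @ tl z @ y) = Psi A X k ([hd z] @ tl z) ** mprod A y + mprod A [hd z] ** Psi A X k (tl z @ y)"
    by (rule Psi_split[OF k]) (use z in simp)
  moreover have "[hd z] @ tl z = z" using zne by simp
  ultimately have "Psi A X k (z @ y) = Psi A X k z ** mprod A y + A (hd z) ** Psi A X k (tl z @ y)"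
    by (metis append_Cons append_Nil mprod_single)
  then show ?thesis using z by (simp add: Psi_single)
qed

lemma Psi_peel_r:
  assumes k: "1 \<le> k" and z: "length z = k"
  shows "Psi A X k (p @ z) = Psi A X k (p @ butlast z) ** A (last z) + mprod A p ** X z"
proof -
  have zne: "z \<noteq> []" using k z by auto
  have "Psi A X k (p @ butlast z @ [last z]) = Psi A X k (p @ butlast z) ** mprod A [last z] + mprod A p ** Psi A X k (butlast z @ [last z])"
    by (rule Psi_split[OF k]) (use z in simp)
  moreover have "butlast z @ [last z] = z" using zne by simp
  ultimately show ?thesis using z by (simp add: Psi_single)
qed

lemma shift_iter:
  fixes \<phi> :: "'d list \<Rightarrow> complex^'D^'D"
  assumes base: "\<And>s. length s = Suc n \<Longrightarrow> A (hd s) ** \<phi> (tl s) = \<phi> (butlast s) ** A (last s)"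
  shows "j \<le> n \<Longrightarrow> length p = j \<Longrightarrow> length q = j \<Longrightarrow> length r = n - j \<Longrightarrow>
         mprod A p ** \<phi> (r @ q) = \<phi> (p @ r) ** mprod A q"
proof (induct j arbitrary: p q r)
  case 0 then show ?case by simp
next
  case (Suc j)
  obtain a p' where p: "p = a # p'" using Suc by (cases p) auto
  obtain b q' where q: "q = b # q'" using Suc by (cases q) auto
  have IH: "mprod A p' ** \<phi> ((r @ [b]) @ q') = \<phi> (p' @ r @ [b]) ** mprod A q'"
    using Suc p q by (intro Suc(1)) auto
  have bs: "A a ** \<phi> (p' @ r @ [b]) = \<phi> (a # p' @ r) ** A b"
    using base[of "a # p' @ r @ [b]"] Suc p by (simp add: butlast_append)
  have IH': "mprod A p' ** \<phi> (r @ b # q') = \<phi> (p' @ r @ [b]) ** mprod A q'" using IH by simp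
  have "mprod A p ** \<phi> (r @ q) = A a ** (mprod A p' ** \<phi> (r @ b # q'))"
    by (simp add: p q matrix_mul_assoc)
  also have "\<dots> = A a ** (\<phi> (p' @ r @ [b]) ** mprod A q')" by (simp only: IH')
  also have "\<dots> = (A a ** \<phi> (p' @ r @ [b])) ** mprod A q'" by (simp add: matrix_mul_assoc)
  also have "\<dots> = (\<phi> (a # p' @ r) ** A b) ** mprod A q'" by (simp only: bs)
  also have "\<dots> = \<phi> (p @ r) ** mprod A q" by (simp add: p q matrix_mul_assoc)
  finally show ?case .
qed

lemma central_from_shift:
  fixes A :: "'d::finite \<Rightarrow> complex^'D::finite^'D" and \<phi> :: "'d list \<Rightarrow> complex^'D^'D"
  assumes sp: "spans A n" and sh: "\<And>p q. length p = n \<Longrightarrow> length q = n \<Longrightarrow> mprod A p ** \<phi> q = \<phi> p ** mprod A q"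
  shows "\<exists>D. (\<forall>M. D ** M = M ** D) \<and> (\<forall>q. length q = n \<longrightarrow> \<phi> q = D ** mprod A q)"
proof -
  obtain \<alpha> where I: "mat 1 = lc A \<alpha> (words n)" using sp unfolding spans_def by blast
  define D where "D = (\<Sum>p\<in>words n. mscale (\<alpha> p) (\<phi> p))"
  have q: "\<phi> q = D ** mprod A q" if "length q = n" for q
  proof -
    have "\<phi> q = mat 1 ** \<phi> q" by simp
    also have "\<dots> = (\<Sum>p\<in>words n. mscale (\<alpha> p) (mprod A p ** \<phi> q))"
      unfolding I lc_def by (simp add: sum_mult_right mscale_left)
    also have "\<dots> = (\<Sum>p\<in>words n. mscale (\<alpha> p) (\<phi> p ** mprod A q))"
      using that by (intro sum.cong refl) (simp add: sh)
    also have "\<dots> = D ** mprod A q"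
      by (simp add: D_def sum_mult_right mscale_left)
    finally show ?thesis .
  qed
  have p: "\<phi> p = mprod A p ** D" if "length p = n" for p
  proof -
    have "\<phi> p = \<phi> p ** mat 1" by simp
    also have "\<dots> = (\<Sum>q\<in>words n. mscale (\<alpha> q) (\<phi> p ** mprod A q))"
      unfolding I lc_def by (simp add: sum_mult_left mscale_right)
    also have "\<dots> = (\<Sum>q\<in>words n. mscale (\<alpha> q) (mprod A p ** \<phi> q))"
      using that by (intro sum.cong refl) (simp add: sh)
    also have "\<dots> = mprod A p ** D"
      by (simp add: D_def sum_mult_left mscale_right)
    finally show ?thesis .
  qed
  have cen: "D ** M = M ** D" for M
    by (rule lin_ext[OF lin_lmul[OF lin_id] lin_rmul[OF lin_id] sp]) (use p q in \<open>auto\<close>)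
  show ?thesis using cen q by blast
qed

locale core =
  fixes A :: "'d::finite \<Rightarrow> complex^'D::finite^'D" and X :: "'d list \<Rightarrow> complex^'D^'D" and k L N :: nat
  assumes k1: "1 \<le> k" and L1: "1 \<le> L" and spL: "spans A L" and NL: "2 * L + 2 * k \<le> N"
    and cyc: "\<And>ys. length ys = N \<Longrightarrow> Fc A X k ys = 0"
begin

lemma sp: "L \<le> m \<Longrightarrow> spans A m"
  by (rule spans_ge[OF spL L1])

lemma nk:
  assumes u: "length u = k - 1" and v: "length v = k - 1" and l: "L \<le> l" "l \<le> L + 2"
  shows "NK A l (\<lambda>x. Psi A X k (u @ x @ v))"
proof -
  have "L \<le> N - 2 * (k - 1) - l" using l NL k1 by linarith
  then have "spans A (N - 2 * (k - 1) - l)" by (rule sp)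
  moreover have "l + (N - 2 * (k - 1) - l) + 2 * (k - 1) = N" using l NL k1 by simp
  ultimately show ?thesis by (intro NK_Psi[OF k1 cyc u v]) auto
qed

definition Th :: "nat \<Rightarrow> 'd list \<Rightarrow> 'd list \<Rightarrow> complex^'D^'D \<Rightarrow> complex^'D^'D" where
  "Th l u v P = ext A l (\<lambda>x. Psi A X k (u @ x @ v)) P"

lemma Th_word:
  assumes "length u = k - 1" "length v = k - 1" "L \<le> l" "l \<le> L + 2" "length x = l"
  shows "Th l u v (mprod A x) = Psi A X k (u @ x @ v)"
  unfolding Th_def using assms by (intro ext_word[OF sp nk]) auto

lemma Th_lin:
  assumes "length u = k - 1" "length v = k - 1" "L \<le> l" "l \<le> L + 2"
  shows "lin (Th l u v)"
  unfolding lin_def Th_def using assms by (simp add: ext_add[OF sp nk] ext_scale[OF sp nk])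

lemma R1:
  assumes z: "length z = k" and v: "length v = k - 1" and l: "L \<le> l" "l \<le> L + 1"
  shows "Th (Suc l) (butlast z) v (A (last z) ** P) = A (hd z) ** Th l (tl z) v P + X z ** P ** mprod A v"
proof -
  have zne: "z \<noteq> []" using z k1 by auto
  have bz: "length (butlast z) = k - 1" "length (tl z) = k - 1" using z by auto
  have lf: "lin (\<lambda>P. Th (Suc l) (butlast z) v (A (last z) ** P))"
    by (rule lin_comp_l, rule Th_lin) (use bz v l in auto)
  have lg: "lin (\<lambda>P. A (hd z) ** Th l (tl z) v P + X z ** P ** mprod A v)"
    by (intro lin_plus lin_lmul lin_mul_both Th_lin) (use bz v l in auto)
  show ?thesis
  proof (rule lin_ext[OF lf lg sp[OF l(1)]])
    fix x :: "'d list" assume x: "x \<in> words l"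
    have "Th (Suc l) (butlast z) v (mprod A (last z # x)) = Psi A X k (butlast z @ (last z # x) @ v)"
      using bz v l x by (intro Th_word) auto
    then have "Th (Suc l) (butlast z) v (A (last z) ** mprod A x) = Psi A X k (butlast z @ (last z # x) @ v)"
      by simp
    also have "butlast z @ (last z # x) @ v = z @ (x @ v)" using zne by simp
    also have "Psi A X k (z @ (x @ v)) = X z ** mprod A (x @ v) + A (hd z) ** Psi A X k (tl z @ x @ v)"
      by (rule Psi_peel[OF k1 z])
    also have "\<dots> = A (hd z) ** Th l (tl z) v (mprod A x) + X z ** mprod A x ** mprod A v"
      using bz v l x by (simp add: Th_word mprod_append matrix_mul_assoc add.commute)
    finally show "Th (Suc l) (butlast z) v (A (last z) ** mprod A x) = A (hd z) ** Th l (tl z) v (mprod A x) + X z ** mprod A x ** mprod A v" .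
  qed
qed

lemma R2:
  assumes z: "length z = k" and u: "length u = k - 1" and l: "L \<le> l" "l \<le> L + 1"
  shows "Th (Suc l) u (tl z) (P ** A (hd z)) = Th l u (butlast z) P ** A (last z) + mprod A u ** P ** X z"
proof -
  have zne: "z \<noteq> []" using z k1 by auto
  have bz: "length (butlast z) = k - 1" "length (tl z) = k - 1" using z by auto
  have lf: "lin (\<lambda>P. Th (Suc l) u (tl z) (P ** A (hd z)))"
    by (rule lin_comp_r, rule Th_lin) (use bz u l in auto)
  have lg: "lin (\<lambda>P. Th l u (butlast z) P ** A (last z) + mprod A u ** P ** X z)"
    by (intro lin_plus lin_rmul lin_mul_both Th_lin) (use bz u l in auto)
  show ?thesis
  proof (rule lin_ext[OF lf lg sp[OF l(1)]])
    fix x :: "'d list" assume x: "x \<in> words l"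
    have "Th (Suc l) u (tl z) (mprod A (x @ [hd z])) = Psi A X k (u @ (x @ [hd z]) @ tl z)"
      using bz u l x by (intro Th_word) auto
    then have "Th (Suc l) u (tl z) (mprod A x ** A (hd z)) = Psi A X k (u @ (x @ [hd z]) @ tl z)"
      by (simp add: mprod_snoc)
    also have "u @ (x @ [hd z]) @ tl z = (u @ x) @ z" using zne by simp
    also have "Psi A X k ((u @ x) @ z) = Psi A X k ((u @ x) @ butlast z) ** A (last z) + mprod A (u @ x) ** X z"
      by (rule Psi_peel_r[OF k1 z])
    also have "\<dots> = Th l u (butlast z) (mprod A x) ** A (last z) + mprod A u ** mprod A x ** X z"
      using bz u l x by (simp add: Th_word mprod_append matrix_mul_assoc)
    finally show "Th (Suc l) u (tl z) (mprod A x ** A (hd z)) = Th l u (butlast z) (mprod A x) ** A (last z) + mprod A u ** mprod A x ** X z" .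
  qed
qed

end


lemma trace_rotate_central:
  assumes cen: "\<And>M. D ** M = M ** D"
  shows "trace (D ** mprod A (rotate n xs)) = trace (D ** mprod A xs)"
proof -
  let ?j = "n mod length xs"
  have "trace (D ** mprod A (rotate n xs)) = trace ((D ** mprod A (drop ?j xs)) ** mprod A (take ?j xs))"
    by (simp add: rotate_drop_take mprod_append matrix_mul_assoc)
  also have "\<dots> = trace (mprod A (take ?j xs) ** (D ** mprod A (drop ?j xs)))"
    by (rule trace_mul_sym)
  also have "\<dots> = trace (D ** (mprod A (take ?j xs) ** mprod A (drop ?j xs)))"
  proof -
    have c: "mprod A (take ?j xs) ** D = D ** mprod A (take ?j xs)" by (rule cen[symmetric])
    show ?thesis by (simp only: matrix_mul_assoc c)
  qed
  also have "\<dots> = trace (D ** mprod A xs)"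
    by (simp add: mprod_append[symmetric])
  finally show ?thesis .
qed

lemma Fc_add: "Fc A (\<lambda>w. Y w + Z w) k ys = Fc A Y k ys + Fc A Z k ys"
  by (simp add: Fc_def Gt_def add_mult_right trace_add sum.distrib)

lemma Fc_central:
  assumes cen: "\<And>M. D ** M = M ** D"
  shows "Fc A (\<lambda>w. D ** mprod A w) k ys = of_nat (length ys) * trace (D ** mprod A ys)"
proof -
  have "Gt A (\<lambda>w. D ** mprod A w) k (rotate i ys) = trace (D ** mprod A ys)" for i
  proof -
    have "Gt A (\<lambda>w. D ** mprod A w) k (rotate i ys) = trace (D ** mprod A (rotate i ys))"
      unfolding Gt_def by (simp add: matrix_mul_assoc[symmetric] mprod_append[symmetric])
    also have "\<dots> = trace (D ** mprod A ys)" by (rule trace_rotate_central[OF cen])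
    finally show ?thesis .
  qed
  then show ?thesis by (simp add: Fc_def)
qed

context core
begin

definition Dl where "Dl u v P = Th (Suc L) u v P - Th L u v P"
definition Dl2 where "Dl2 u v P = Th (Suc (Suc L)) u v P - Th (Suc L) u v P"

lemma Da:
  assumes z: "length z = k" and v: "length v = k - 1"
  shows "Dl2 (butlast z) v (A (last z) ** P) = A (hd z) ** Dl (tl z) v P"
  unfolding Dl2_def Dl_def using R1[OF z v, of "Suc L" P] R1[OF z v, of L P]
  by (simp add: diff_mult_left)

lemma Db:
  assumes z: "length z = k" and u: "length u = k - 1"
  shows "Dl2 u (tl z) (P ** A (hd z)) = Dl u (butlast z) P ** A (last z)"
  unfolding Dl2_def Dl_def using R2[OF z u, of "Suc L" P] R2[OF z u, of L P]
  by (simp add: diff_mult_right)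

lemma Dstar:
  assumes z1: "length z1 = k" and z2: "length z2 = k"
  shows "A (hd z1) ** Dl (tl z1) (tl z2) (P ** A (hd z2)) = Dl (butlast z1) (butlast z2) (A (last z1) ** P) ** A (last z2)"
proof -
  have t2: "length (tl z2) = k - 1" "length (butlast z1) = k - 1" using z1 z2 by auto
  have "A (hd z1) ** Dl (tl z1) (tl z2) (P ** A (hd z2)) = Dl2 (butlast z1) (tl z2) (A (last z1) ** (P ** A (hd z2)))"
    by (rule Da[OF z1 t2(1), symmetric])
  also have "\<dots> = Dl2 (butlast z1) (tl z2) ((A (last z1) ** P) ** A (hd z2))"
    by (simp add: matrix_mul_assoc)
  also have "\<dots> = Dl (butlast z1) (butlast z2) (A (last z1) ** P) ** A (last z2)"
    by (rule Db[OF z2 t2(2)])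
  finally show ?thesis .
qed

definition phi where
  "phi s = Dl (take (k - 1) s) (drop (length s - (k - 1)) s) (mprod A (drop (k - 1) (take (length s - (k - 1)) s)))"

lemma phi_app:
  assumes u: "length u = k - 1" and v: "length v = k - 1"
  shows "phi (u @ x @ v) = Dl u v (mprod A x)"
proof -
  have "take (length (u @ x @ v) - (k - 1)) (u @ x @ v) = u @ x" using u v by simp
  moreover have "drop (length (u @ x @ v) - (k - 1)) (u @ x @ v) = v" using u v by simp
  ultimately show ?thesis unfolding phi_def using u by simp
qed

lemma phi_shift:
  assumes s: "2 * k \<le> length s"
  shows "A (hd s) ** phi (tl s) = phi (butlast s) ** A (last s)"
proof -
  define z1 where "z1 = take k s"
  define z2 where "z2 = drop (length s - k) s"
  define m where "m = drop k (take (length s - k) s)"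
  have l1: "length z1 = k" and l2: "length z2 = k" using s by (auto simp: z1_def z2_def)
  have se: "s = z1 @ m @ z2"
  proof -
    have "k \<le> length s - k" using s by linarith
    then have tt: "take k (take (length s - k) s) = take k s" by (simp add: min_def)
    have "take (length s - k) s = z1 @ m"
      using append_take_drop_id[of k "take (length s - k) s"] tt unfolding z1_def m_def by simp
    then show ?thesis unfolding z2_def using append_take_drop_id[of "length s - k" s] by simp
  qed
  have ne1: "z1 \<noteq> []" and ne2: "z2 \<noteq> []" using l1 l2 k1 by auto
  have tls: "tl s = tl z1 @ (m @ [hd z2]) @ tl z2"
    using ne1 ne2 unfolding se by (cases z1; cases z2) auto
  have bls: "butlast s = butlast z1 @ ([last z1] @ m) @ butlast z2"
  proof -
    have "butlast s = z1 @ m @ butlast z2" unfolding se using ne2 by (simp add: butlast_append)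
    also have "z1 = butlast z1 @ [last z1]" using ne1 by simp
    finally show ?thesis by simp
  qed
  have hds: "hd s = hd z1" using ne1 unfolding se by simp
  have lss: "last s = last z2" using ne2 unfolding se by simp
  have lens: "length (tl z1) = k - 1" "length (tl z2) = k - 1" "length (butlast z1) = k - 1" "length (butlast z2) = k - 1"
    using l1 l2 by auto
  show ?thesis
    unfolding tls bls hds lss phi_app[OF lens(1,2)] phi_app[OF lens(3,4)]
    using Dstar[OF l1 l2, of "mprod A m"] by (simp add: mprod_append mprod_snoc)
qed

definition n0 where "n0 = L + 2 * k - 2"

lemma n0_shift: "length p = n0 \<Longrightarrow> length q = n0 \<Longrightarrow> mprod A p ** phi q = phi p ** mprod A q"
  using shift_iter[of n0 A phi n0 p q "[]"] phi_shift L1 k1 by (simp add: n0_def)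

definition Dc where "Dc = (SOME D. (\<forall>M. D ** M = M ** D) \<and> (\<forall>q. length q = n0 \<longrightarrow> phi q = D ** mprod A q))"

lemma Dc_prop: "(\<forall>M. Dc ** M = M ** Dc) \<and> (\<forall>q. length q = n0 \<longrightarrow> phi q = Dc ** mprod A q)"
proof -
  have "spans A n0" using L1 k1 by (intro sp) (simp add: n0_def)
  from central_from_shift[OF this n0_shift]
  show ?thesis unfolding Dc_def by (rule someI_ex)
qed

lemma Dc_cen: "Dc ** M = M ** Dc" using Dc_prop by blast

lemma Dl_lin: "length u = k - 1 \<Longrightarrow> length v = k - 1 \<Longrightarrow> lin (Dl u v)"
  unfolding Dl_def[abs_def] by (intro lin_minus Th_lin) auto

lemma Dl_formula:
  assumes u: "length u = k - 1" and v: "length v = k - 1"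
  shows "Dl u v P = Dc ** mprod A u ** P ** mprod A v"
proof (rule lin_ext[OF Dl_lin[OF u v] lin_mul_both sp[of L]])
  fix x :: "'d list" assume x: "x \<in> words L"
  have "Dl u v (mprod A x) = phi (u @ x @ v)" by (simp add: phi_app[OF u v])
  also have "\<dots> = Dc ** mprod A (u @ x @ v)" using Dc_prop u v x k1 by (simp add: n0_def)
  finally show "Dl u v (mprod A x) = Dc ** mprod A u ** mprod A x ** mprod A v"
    by (simp add: mprod_append matrix_mul_assoc)
qed simp

lemma extrap:
  "length u = k - 1 \<Longrightarrow> length v = k - 1 \<Longrightarrow> length x = L + d \<Longrightarrow>
   Psi A X k (u @ x @ v) = Th L u v (mprod A x) + mscale (of_nat d) (Dc ** mprod A (u @ x @ v))"
proof (induct d arbitrary: u x)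
  case 0 then show ?case by (simp add: Th_word)
next
  case (Suc d)
  obtain c x' where x: "x = c # x'" using Suc by (cases x) auto
  define z where "z = u @ [c]"
  have z: "length z = k" using Suc k1 by (simp add: z_def)
  have hz: "butlast z = u" "last z = c" by (simp_all add: z_def)
  have tz: "length (tl z) = k - 1" using z by simp
  have lx': "length x' = L + d" using Suc x by simp
  have "Psi A X k (u @ x @ v) = Psi A X k (z @ (x' @ v))" by (simp add: x z_def)
  also have "\<dots> = X z ** mprod A (x' @ v) + A (hd z) ** Psi A X k (tl z @ x' @ v)"
    by (rule Psi_peel[OF k1 z])
  also have "Psi A X k (tl z @ x' @ v) = Th L (tl z) v (mprod A x') + mscale (of_nat d) (Dc ** mprod A (tl z @ x' @ v))"
    by (rule Suc(1)[OF tz Suc(3) lx'])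
  finally have e1: "Psi A X k (u @ x @ v) = X z ** mprod A x' ** mprod A v + A (hd z) ** Th L (tl z) v (mprod A x')
       + mscale (of_nat d) (A (hd z) ** Dc ** mprod A (tl z @ x' @ v))"
    by (simp add: mprod_append matrix_add_ldistrib mscale_right matrix_mul_assoc)
  have r1: "Th (Suc L) u v (A c ** mprod A x') = A (hd z) ** Th L (tl z) v (mprod A x') + X z ** mprod A x' ** mprod A v"
    using R1[OF z Suc(3), of L "mprod A x'"] hz by simp
  have thsuc: "Th (Suc L) u v (A c ** mprod A x') = Th L u v (mprod A x) + Dc ** mprod A (u @ x @ v)"
  proof -
    have "Th (Suc L) u v (A c ** mprod A x') = Th L u v (A c ** mprod A x') + Dl u v (A c ** mprod A x')"
      by (simp add: Dl_def)
    then show ?thesis using Dl_formula[OF Suc(2,3)] by (simp add: x mprod_append matrix_mul_assoc)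
  qed
  have cz: "A (hd z) ** Dc ** mprod A (tl z @ x' @ v) = Dc ** mprod A (u @ x @ v)"
  proof -
    have "z \<noteq> []" using z k1 by auto
    then have zz: "z = hd z # tl z" by simp
    have "u @ x @ v = z @ x' @ v" by (simp add: x z_def)
    also have "\<dots> = hd z # (tl z @ x' @ v)" by (subst zz) simp
    finally have e: "u @ x @ v = hd z # (tl z @ x' @ v)" .
    have "mprod A (u @ x @ v) = A (hd z) ** mprod A (tl z @ x' @ v)" unfolding e by simp
    then show ?thesis by (simp add: Dc_cen matrix_mul_assoc[symmetric])
  qed
  show ?case
    unfolding e1 cz using r1 thsuc
    by (simp add: mscale_addc algebra_simps)
qed

end


context core
begin

definition Y where "Y w = X w - Dc ** mprod A w"
definition dl where "dl u v P = Th L u v P - mscale (of_nat (L + k - 1)) (Dc ** mprod A u ** P ** mprod A v)"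

lemma PsiY: "Psi A Y k s = Psi A X k s - mscale (of_nat (Suc (length s) - k)) (Dc ** mprod A s)"
proof -
  have "Psi A Y k s = Psi A (\<lambda>w. X w - Dc ** mprod A w) k s" by (simp add: Y_def[abs_def])
  also have "\<dots> = Psi A X k s - Psi A (\<lambda>w. Dc ** mprod A w) k s" by (rule Psi_diff)
  also have "Psi A (\<lambda>w. Dc ** mprod A w) k s = mscale (of_nat (Suc (length s) - k)) (Dc ** mprod A s)"
    by (rule Psi_central) (rule Dc_cen)
  finally show ?thesis .
qed

lemma dl_word:
  assumes u: "length u = k - 1" and v: "length v = k - 1" and x: "length x = L + d"
  shows "dl u v (mprod A x) = Psi A Y k (u @ x @ v)"
proof -
  have ar: "Suc (length (u @ x @ v)) - k = (L + k - 1) + d" using u v x k1 by simp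
  have m: "Dc ** mprod A u ** mprod A x ** mprod A v = Dc ** mprod A (u @ x @ v)"
    by (simp add: mprod_append matrix_mul_assoc)
  show ?thesis
    unfolding dl_def PsiY extrap[OF u v x] ar m
    by (simp add: mscale_addc algebra_simps)
qed

lemma dl_lin: "length u = k - 1 \<Longrightarrow> length v = k - 1 \<Longrightarrow> lin (dl u v)"
  unfolding dl_def[abs_def]
  by (intro lin_minus Th_lin lin_mscale) (auto intro: lin_mul_both[unfolded matrix_mul_assoc])

lemma dl_GD:
  assumes u: "length u = k - 1" and v: "length v = k - 1" and w: "length w = k - 1"
  shows "dl u v (P ** mprod A w ** Q) = dl u w P ** Q ** mprod A v + mprod A u ** P ** dl w v Q"
proof -
  have step1: "dl u v (mprod A x1 ** mprod A w ** Q) = dl u w (mprod A x1) ** Q ** mprod A v + mprod A u ** mprod A x1 ** dl w v Q"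
    if x1: "x1 \<in> words L" for x1 Q
  proof -
    have lf: "lin (\<lambda>Q. dl u v ((mprod A x1 ** mprod A w) ** Q))"
      by (rule lin_comp_l, rule dl_lin[OF u v])
    have lg: "lin (\<lambda>Q. dl u w (mprod A x1) ** Q ** mprod A v + mprod A u ** mprod A x1 ** dl w v Q)"
      by (intro lin_plus lin_mul_both lin_lmul dl_lin[OF w v])
    have "dl u v ((mprod A x1 ** mprod A w) ** Q) = dl u w (mprod A x1) ** Q ** mprod A v + mprod A u ** mprod A x1 ** dl w v Q"
    proof (rule lin_ext[OF lf lg sp[of L]])
      fix x2 :: "'d list" assume x2: "x2 \<in> words L"
      have "dl u v ((mprod A x1 ** mprod A w) ** mprod A x2) = dl u v (mprod A (x1 @ w @ x2))"
        by (simp add: mprod_append matrix_mul_assoc)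
      also have "\<dots> = Psi A Y k (u @ (x1 @ w @ x2) @ v)"
        by (rule dl_word[OF u v, of _ "L + k - 1"]) (use x1 x2 w k1 in simp)
      also have "u @ (x1 @ w @ x2) @ v = (u @ x1) @ w @ (x2 @ v)" by simp
      also have "Psi A Y k ((u @ x1) @ w @ (x2 @ v)) = Psi A Y k ((u @ x1) @ w) ** mprod A (x2 @ v) + mprod A (u @ x1) ** Psi A Y k (w @ x2 @ v)"
        by (rule Psi_split[OF k1 w])
      also have "Psi A Y k ((u @ x1) @ w) = dl u w (mprod A x1)"
        using dl_word[OF u w, of x1 0] x1 by simp
      also have "Psi A Y k (w @ x2 @ v) = dl w v (mprod A x2)"
        using dl_word[OF w v, of x2 0] x2 by simp
      finally show "dl u v ((mprod A x1 ** mprod A w) ** mprod A x2) = dl u w (mprod A x1) ** mprod A x2 ** mprod A v + mprod A u ** mprod A x1 ** dl w v (mprod A x2)"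
        by (simp add: mprod_append matrix_mul_assoc)
    qed simp
    then show ?thesis by simp
  qed
  have lf: "lin (\<lambda>P. dl u v (P ** (mprod A w ** Q)))"
    by (rule lin_comp_r, rule dl_lin[OF u v])
  have lg: "lin (\<lambda>P. dl u w P ** Q ** mprod A v + mprod A u ** P ** dl w v Q)"
    by (intro lin_plus lin_mul_both lin_rmul dl_lin[OF u w])
  have "dl u v (P ** (mprod A w ** Q)) = dl u w P ** Q ** mprod A v + mprod A u ** P ** dl w v Q"
  proof (rule lin_ext[OF lf lg sp[of L]])
    fix x1 :: "'d list" assume x1: "x1 \<in> words L"
    show "dl u v (mprod A x1 ** (mprod A w ** Q)) = dl u w (mprod A x1) ** Q ** mprod A v + mprod A u ** mprod A x1 ** dl w v Q"
      using step1[OF x1, of Q] by (simp add: matrix_mul_assoc)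
  qed simp
  then show ?thesis by (simp add: matrix_mul_assoc)
qed

lemma exB: "\<exists>B. \<forall>u v P. length u = k - 1 \<longrightarrow> length v = k - 1 \<longrightarrow>
            dl u v P = mprod A u ** P ** B v - B u ** P ** mprod A v"
proof (rule structure_thm[of A "L + k - 1" k dl])
  show "spans A (L + k - 1)" using k1 by (intro sp) simp
qed (auto intro: dl_lin dl_GD)

lemma Y_form: "\<exists>B. \<forall>z. length z = k \<longrightarrow> Y z = A (hd z) ** B (tl z) - B (butlast z) ** A (last z)"
proof -
  obtain B where B: "\<And>u v P. length u = k - 1 \<Longrightarrow> length v = k - 1 \<Longrightarrow>
            dl u v P = mprod A u ** P ** B v - B u ** P ** mprod A v"
    using exB by blast
  have "Y z = A (hd z) ** B (tl z) - B (butlast z) ** A (last z)" if z: "length z = k" for z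
  proof -
    define M where "M = Y z - A (hd z) ** B (tl z) + B (butlast z) ** A (last z)"
    have zne: "z \<noteq> []" using z k1 by auto
    have lz: "length (butlast z) = k - 1" "length (tl z) = k - 1" using z by auto
    have Az: "mprod A (butlast z) ** A (last z) = A (hd z) ** mprod A (tl z)"
    proof -
      have "mprod A (butlast z) ** A (last z) = mprod A z" using zne by (metis mprod_snoc append_butlast_last_id)
      also have "\<dots> = A (hd z) ** mprod A (tl z)" using zne by (metis mprod_Cons list.collapse)
      finally show ?thesis .
    qed
    have MA: "M ** mprod A x ** mprod A v = 0" if x: "length x = L" and v: "length v = k - 1" for x v
    proof -
      have "dl (butlast z) v (mprod A (last z # x)) = Psi A Y k (butlast z @ (last z # x) @ v)"
        by (rule dl_word[OF lz(1) v, of _ 1]) (use x in simp)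
      also have "butlast z @ (last z # x) @ v = z @ (x @ v)" using zne by simp
      also have "Psi A Y k (z @ (x @ v)) = Y z ** mprod A (x @ v) + A (hd z) ** Psi A Y k (tl z @ x @ v)"
        by (rule Psi_peel[OF k1 z])
      also have "Psi A Y k (tl z @ x @ v) = dl (tl z) v (mprod A x)"
        using dl_word[OF lz(2) v, of x 0] x by simp
      finally have e: "dl (butlast z) v (mprod A (last z # x)) = Y z ** mprod A (x @ v) + A (hd z) ** dl (tl z) v (mprod A x)" .
      have e2: "mprod A (butlast z) ** A (last z) ** mprod A x ** B v - B (butlast z) ** A (last z) ** mprod A x ** mprod A v
           = Y z ** mprod A x ** mprod A v + A (hd z) ** (mprod A (tl z) ** mprod A x ** B v - B (tl z) ** mprod A x ** mprod A v)"
        using e unfolding B[OF lz(1) v] B[OF lz(2) v] by (simp add: mprod_append matrix_mul_assoc)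
      have "M ** mprod A x ** mprod A v = Y z ** mprod A x ** mprod A v - A (hd z) ** B (tl z) ** mprod A x ** mprod A v
          + B (butlast z) ** A (last z) ** mprod A x ** mprod A v"
        by (simp add: M_def add_mult_right diff_mult_right)
      also have "\<dots> = 0"
        using e2 unfolding Az by (simp add: matrix_add_ldistrib diff_mult_left matrix_mul_assoc algebra_simps)
      finally show ?thesis .
    qed
    have "M = 0"
    proof -
      have spn: "spans A (L + (k - 1))" by (rule sp) simp
      obtain \<alpha> where I: "mat 1 = lc A \<alpha> (words (L + (k - 1)))" using spn unfolding spans_def by blast
      have "M = M ** mat 1" by simp
      also have "\<dots> = (\<Sum>y\<in>words (L + (k - 1)). mscale (\<alpha> y) (M ** mprod A y))"
        unfolding I lc_def by (simp add: sum_mult_left mscale_right)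
      also have "\<dots> = 0"
      proof (intro sum.neutral ballI)
        fix y :: "'d list" assume y: "y \<in> words (L + (k - 1))"
        have "M ** mprod A y = M ** mprod A (take L y) ** mprod A (drop L y)"
          using mprod_take_drop[of A y L] by (simp add: matrix_mul_assoc)
        also have "\<dots> = 0" using y by (intro MA) auto
        finally show "mscale (\<alpha> y) (M ** mprod A y) = 0" by simp
      qed
      finally show ?thesis .
    qed
    then show ?thesis unfolding M_def by (simp add: algebra_simps)
  qed
  then show ?thesis by blast
qed

lemma Dc_zero: "Dc = 0"
proof -
  obtain B where B: "\<And>z. length z = k \<Longrightarrow> Y z = A (hd z) ** B (tl z) - B (butlast z) ** A (last z)"
    using Y_form by blast
  have kN: "k \<le> N" using NL by simp
  have N0: "N > 0" using kN k1 by simp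
  have tr: "trace (Dc ** mprod A ys) = 0" if ys: "length ys = N" for ys
  proof -
    have X: "X = (\<lambda>w. Y w + Dc ** mprod A w)" by (simp add: Y_def[abs_def])
    have "0 = Fc A X k ys" using cyc[OF ys] by simp
    also have "\<dots> = Fc A Y k ys + Fc A (\<lambda>w. Dc ** mprod A w) k ys"
      by (subst X) (rule Fc_add)
    also have "Fc A Y k ys = 0"
      by (rule Fc_cob[OF k1]) (use ys kN B in auto)
    also have "Fc A (\<lambda>w. Dc ** mprod A w) k ys = of_nat N * trace (Dc ** mprod A ys)"
      using Fc_central[of Dc A k ys] Dc_cen ys by simp
    finally show ?thesis using N0 by simp
  qed
  have "trace (Dc ** P) = 0" for P
  proof -
    have spN: "spans A N" using NL by (intro sp) simp
    have "P = lc A (fr A N P) (words N)" by (rule fr[OF spN])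
    then have "trace (Dc ** P) = trace (Dc ** lc A (fr A N P) (words N))" by simp
    also have "\<dots> = (\<Sum>y\<in>words N. fr A N P y * trace (Dc ** mprod A y))"
      by (simp add: lc_def sum_mult_left trace_sum mscale_right[symmetric] trace_mscale)
    also have "\<dots> = 0" using tr by simp
    finally show ?thesis .
  qed
  then show ?thesis by (rule trace_zero_all)
qed

theorem core_result: "\<exists>B. \<forall>w. length w = k \<longrightarrow> X w = A (hd w) ** B (tl w) - B (butlast w) ** A (last w)"
proof -
  have "X = Y" by (simp add: Y_def[abs_def] Dc_zero)
  then show ?thesis using Y_form by simp
qed

end


theorem theorem1:
  fixes A :: "'d::finite \<Rightarrow> complex^'D::finite^'D"
    and h :: "'d list \<Rightarrow> 'd list \<Rightarrow> complex"
    and k L N :: nat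
    and E :: complex
  assumes "1 \<le> k"
    and "injectivity_length A L"
    and "N > 2 * L + 2 * k - 1"
  shows "(\<forall>xs\<in>words N. local_sum_op N k h (mps_state A N) xs = E * mps_state A N xs)
     \<longleftrightarrow> (\<exists>B :: 'd list \<Rightarrow> complex^'D^'D. \<forall>is\<in>words k.
            (\<Sum>js\<in>words k. mscale (h is js - (E / of_nat N) * (if is = js then 1 else 0)) (mprod A js))
            = A (hd is) ** B (tl is) - B (butlast is) ** A (last is))"
proof -
  have k1: "1 \<le> k" by fact
  have L1: "1 \<le> L" and inj: "injective_at A L"
    using assms(2) by (auto simp: injectivity_length_def)
  have spL: "spans A L" by (rule inj_spans[OF inj])
  have NL: "2 * L + 2 * k \<le> N" using assms(3) k1 by linarith
  have kN: "k \<le> N" using NL by simp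
  have eqv: "local_sum_op N k h (mps_state A N) xs = E * mps_state A N xs \<longleftrightarrow> Fc A (Xh A h k N E) k xs = 0"
    if "length xs = N" for xs
  proof -
    have e: "local_sum_op N k h (mps_state A N) xs - E * mps_state A N xs = Fc A (Xh A h k N E) k xs"
      by (rule partA[OF that k1 kN])
    show ?thesis unfolding e[symmetric] by simp
  qed
  have XhE: "(\<Sum>js\<in>words k. mscale (h is js - (E / of_nat N) * (if is = js then 1 else 0)) (mprod A js)) = Xh A h k N E is" for "is"
    by (simp add: Xh_def)
  show ?thesis
  proof
    assume lhs: "\<forall>xs\<in>words N. local_sum_op N k h (mps_state A N) xs = E * mps_state A N xs"
    have cyc: "Fc A (Xh A h k N E) k ys = 0" if "length ys = N" for ys
      using lhs eqv[OF that] that by simp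
    interpret c: core A "Xh A h k N E" k L N
    proof
      show "1 \<le> k" "1 \<le> L" "spans A L" "2 * L + 2 * k \<le> N" by (fact k1, fact L1, fact spL, fact NL)
      show "Fc A (Xh A h k N E) k ys = 0" if "length ys = N" for ys by (rule cyc[OF that])
    qed
    obtain B where B: "\<And>w. length w = k \<Longrightarrow> Xh A h k N E w = A (hd w) ** B (tl w) - B (butlast w) ** A (last w)"
      using c.core_result by blast
    show "\<exists>B :: 'd list \<Rightarrow> complex^'D^'D. \<forall>is\<in>words k.
            (\<Sum>js\<in>words k. mscale (h is js - (E / of_nat N) * (if is = js then 1 else 0)) (mprod A js))
            = A (hd is) ** B (tl is) - B (butlast is) ** A (last is)"
    proof (intro exI[of _ B] ballI)
      fix "is" :: "'d list" assume "is \<in> words k"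
      then show "(\<Sum>js\<in>words k. mscale (h is js - (E / of_nat N) * (if is = js then 1 else 0)) (mprod A js))
            = A (hd is) ** B (tl is) - B (butlast is) ** A (last is)"
        unfolding XhE by (intro B) simp
    qed
  next
    assume "\<exists>B :: 'd list \<Rightarrow> complex^'D^'D. \<forall>is\<in>words k.
            (\<Sum>js\<in>words k. mscale (h is js - (E / of_nat N) * (if is = js then 1 else 0)) (mprod A js))
            = A (hd is) ** B (tl is) - B (butlast is) ** A (last is)"
    then obtain B :: "'d list \<Rightarrow> complex^'D^'D" where
      B0: "\<forall>is\<in>words k. (\<Sum>js\<in>words k. mscale (h is js - (E / of_nat N) * (if is = js then 1 else 0)) (mprod A js))
            = A (hd is) ** B (tl is) - B (butlast is) ** A (last is)"
      by blast
    have B: "Xh A h k N E is = A (hd is) ** B (tl is) - B (butlast is) ** A (last is)" if "is \<in> words k" for "is"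
      using B0 that unfolding XhE by blast
    show "\<forall>xs\<in>words N. local_sum_op N k h (mps_state A N) xs = E * mps_state A N xs"
    proof
      fix xs :: "'d list" assume xs: "xs \<in> words N"
      have "Fc A (Xh A h k N E) k xs = 0"
      proof (rule Fc_cob[OF k1, where B=B])
        show "k \<le> length xs" using xs kN by simp
        show "Xh A h k N E w = A (hd w) ** B (tl w) - B (butlast w) ** A (last w)" if "length w = k" for w
          using B that by simp
      qed
      then show "local_sum_op N k h (mps_state A N) xs = E * mps_state A N xs"
        using eqv xs by simp
    qed
  qed
qed


end
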